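(* Let $\epsilon$ be a positive parameter. Then there is a deterministic algorithm that, given query access to a list $a_1\le a_2\le\cdots\le a_n$ of nonnegative real numbers sorted in nondecreasing order (and given $n$ and $\epsilon$), outputs a $(1+\epsilon)$-approximation for the sum $\sum_{i=1}^n a_i$ in time $$O\!\left(\frac{1}{\epsilon}\min\!\left(\log n,\ \log\frac{x_{max}}{x_{min}}\right)\cdot\left(\log\frac{1}{\epsilon}+\log\log n\right)\right),$$ where $x_{max}$ and $x_{min}$ are the largest and the least positive elements of the input list, respectively.
   Context: A real number $s$ is a $(1+\epsilon)$-approximation for the sum of $a_1,\dots,a_n$ if $\frac{1}{1+\epsilon}\sum_{i=1}^n a_i\le s\le (1+\epsilon)\sum_{i=1}^n a_i$. The algorithm accesses the input list by reading (querying) individual entries $a_i$ at unit cost; running time counts such queries and arithmetic operations. *)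

theory Defs
  imports Complex_Main
begin

text \<open>A program is a fixed finite list of instructions
(independent of n and epsilon). Every executed instruction costs one time unit;
in particular every query and every arithmetic operation costs 1.\<close>

datatype instr =
    Const nat real
  | Add nat nat nat
  | Sub nat nat nat
  | Mul nat nat nat
  | Dvd nat nat nat
  | Flr nat nat
  | Qry nat nat               (* r_k := a_(floor r_i)  (1-based; 0 if out of range) *)
  | JmpLe nat nat nat
  | Halt

type_synonym prog = "instr list"
type_synonym state = "nat \<times> (nat \<Rightarrow> real)"

definition query :: "real list \<Rightarrow> real \<Rightarrow> real" where
  "query xs r = (let i = \<lfloor>r\<rfloor> in
     if 1 \<le> i \<and> i \<le> int (length xs) then xs ! (nat i - 1) else 0)"

definition halted :: "prog \<Rightarrow> state \<Rightarrow> bool" where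
  "halted P s = (fst s \<ge> length P \<or> P ! fst s = Halt)"

fun exec :: "real list \<Rightarrow> instr \<Rightarrow> nat \<Rightarrow> (nat \<Rightarrow> real) \<Rightarrow> state" where
  "exec xs (Const k c) pc r = (Suc pc, r(k := c))"
| "exec xs (Add k i j) pc r = (Suc pc, r(k := r i + r j))"
| "exec xs (Sub k i j) pc r = (Suc pc, r(k := r i - r j))"
| "exec xs (Mul k i j) pc r = (Suc pc, r(k := r i * r j))"
| "exec xs (Dvd k i j) pc r = (Suc pc, r(k := r i / r j))"
| "exec xs (Flr k i) pc r = (Suc pc, r(k := of_int \<lfloor>r i\<rfloor>))"
| "exec xs (Qry k i) pc r = (Suc pc, r(k := query xs (r i)))"
| "exec xs (JmpLe i j t) pc r = (if r i \<le> r j then (t, r) else (Suc pc, r))"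
| "exec xs Halt pc r = (pc, r)"

definition step :: "prog \<Rightarrow> real list \<Rightarrow> state \<Rightarrow> state" where
  "step P xs s = (if halted P s then s else exec xs (P ! fst s) (fst s) (snd s))"

text \<open>Initial state: register 0 holds n, register 1 holds epsilon, all others 0.
The output is the content of register 0 upon halting.\<close>
definition init :: "nat \<Rightarrow> real \<Rightarrow> state" where
  "init n \<epsilon> = (0, (\<lambda>_. 0)(0 := real n, 1 := \<epsilon>))"

definition run :: "prog \<Rightarrow> real list \<Rightarrow> real \<Rightarrow> nat \<Rightarrow> state" where
  "run P xs \<epsilon> t = (step P xs ^^ t) (init (length xs) \<epsilon>)"

definition halts_within :: "prog \<Rightarrow> real list \<Rightarrow> real \<Rightarrow> real \<Rightarrow> (real \<Rightarrow> bool) \<Rightarrow> bool" where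
  "halts_within P xs \<epsilon> T Q = (\<exists>t. real t \<le> T \<and> halted P (run P xs \<epsilon> t) \<and> Q (snd (run P xs \<epsilon> t) 0))"

definition approx :: "real \<Rightarrow> real \<Rightarrow> real \<Rightarrow> bool" where
  "approx \<epsilon> S s = (S / (1 + \<epsilon>) \<le> s \<and> s \<le> (1 + \<epsilon>) * S)"

definition plog :: "real \<Rightarrow> real" where
  "plog x = log 2 (max 1 x)"

definition ratio :: "real list \<Rightarrow> real" where
  "ratio xs = (if \<exists>x\<in>set xs. x > 0
     then Max (set xs) / Min {x \<in> set xs. x > 0} else 1)"

definition bound :: "real \<Rightarrow> real list \<Rightarrow> real" where
  "bound \<epsilon> xs = (1 + 1 / \<epsilon>) * (1 + min (plog (real (length xs))) (plog (ratio xs)))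
      * (1 + plog (1 / \<epsilon>) + plog (plog (real (length xs))))"

end

theory Submission
  imports Defs
begin


lemma count_char:
  assumes srt: "sorted xs" and mQ: "\<And>x y. x \<le> y \<Longrightarrow> Q x \<Longrightarrow> Q y"
    and r1: "1 \<le> r" and rn: "r \<le> length xs"
  shows "Q (xs ! (length xs - r)) \<longleftrightarrow> r \<le> card {i. i < length xs \<and> Q (xs ! i)}"
proof
  assume q: "Q (xs ! (length xs - r))"
  have "{length xs - r..<length xs} \<subseteq> {i. i < length xs \<and> Q (xs ! i)}"
  proof
    fix i assume "i \<in> {length xs - r..<length xs}"
    hence i: "length xs - r \<le> i" "i < length xs" by auto
    have "xs ! (length xs - r) \<le> xs ! i" using srt i by (simp add: sorted_nth_mono)
    thus "i \<in> {i. i < length xs \<and> Q (xs ! i)}" using mQ q i by blast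
  qed
  from card_mono[OF _ this] show "r \<le> card {i. i < length xs \<and> Q (xs ! i)}" using rn by simp
next
  assume rc: "r \<le> card {i. i < length xs \<and> Q (xs ! i)}"
  show "Q (xs ! (length xs - r))"
  proof (rule ccontr)
    assume nq: "\<not> Q (xs ! (length xs - r))"
    have "{i. i < length xs \<and> Q (xs ! i)} \<subseteq> {length xs - r + 1..<length xs}"
    proof
      fix i assume "i \<in> {i. i < length xs \<and> Q (xs ! i)}"
      hence i: "i < length xs" "Q (xs ! i)" by auto
      have "\<not> i \<le> length xs - r"
      proof
        assume "i \<le> length xs - r"
        hence "xs ! i \<le> xs ! (length xs - r)" using srt rn r1 by (simp add: sorted_nth_mono)
        thus False using mQ i nq by blast
      qed
      thus "i \<in> {length xs - r + 1..<length xs}" using i by auto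
    qed
    from card_mono[OF _ this] have "card {i. i < length xs \<and> Q (xs ! i)} \<le> r - 1" using r1 rn by simp
    thus False using rc r1 by linarith
  qed
qed

lemma query_int: "query xs (of_int k) = (if 1 \<le> k \<and> k \<le> int (length xs) then xs ! (nat k - 1) else 0)"
  unfolding query_def Let_def by simp
lemma query_nat: "query xs (real k) = (if 1 \<le> k \<and> k \<le> length xs then xs ! (k - 1) else 0)"
proof -
  have "query xs (real k) = query xs (of_int (int k))" by simp
  also have "\<dots> = (if 1 \<le> k \<and> k \<le> length xs then xs ! (k - 1) else 0)"
    unfolding query_int by (auto simp: nat_diff_distrib')
  finally show ?thesis .
qed

lemma qtest:
  assumes srt: "sorted xs" and mQ: "\<And>x y. x \<le> y \<Longrightarrow> Q x \<Longrightarrow> Q y" and nQ: "\<not> Q 0"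
    and y1: "1 \<le> y"
  shows "Q (query xs (real (length xs) + 1 + of_int \<lfloor>- y\<rfloor>)) \<longleftrightarrow> y \<le> real (card {i. i < length xs \<and> Q (xs ! i)})"
proof -
  define c where "c = card {i. i < length xs \<and> Q (xs ! i)}"
  have cn: "c \<le> length xs" unfolding c_def
    by (rule order.trans[OF card_mono[of "{..<length xs}"]]) auto
  define r where "r = \<lceil>y\<rceil>"
  have r1: "1 \<le> r" using y1 unfolding r_def by linarith
  have eq: "real (length xs) + 1 + of_int \<lfloor>- y\<rfloor> = of_int (int (length xs) + 1 - r)"
    unfolding r_def ceiling_def by simp
  have yc: "y \<le> real c \<longleftrightarrow> r \<le> int c" unfolding r_def by (simp add: ceiling_le_iff)
  show ?thesis
  proof (cases "r \<le> int (length xs)")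
    case True
    have "query xs (of_int (int (length xs) + 1 - r)) = xs ! (length xs - nat r)"
    proof -
      have "nat (int (length xs) + 1 - r) - 1 = length xs - nat r" using True r1 by linarith
      thus ?thesis unfolding query_int using True r1 by simp
    qed
    moreover have "Q (xs ! (length xs - nat r)) \<longleftrightarrow> nat r \<le> c"
      unfolding c_def using count_char[OF srt, of Q "nat r"] mQ True r1 by simp
    ultimately show ?thesis using eq yc r1 c_def by auto
  next
    case False
    have "query xs (of_int (int (length xs) + 1 - r)) = 0"
      unfolding query_int using False by simp
    thus ?thesis using eq yc nQ False cn c_def by auto
  qed
qed



definition thr :: "real \<Rightarrow> real \<Rightarrow> nat \<Rightarrow> real" where
  "thr T0 \<rho> i = T0 / \<rho> ^ i"

definition gf :: "real \<Rightarrow> real \<Rightarrow> nat \<Rightarrow> real \<Rightarrow> real" where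
  "gf T0 \<rho> m x = (\<Sum>i<m. if thr T0 \<rho> i \<le> x then thr T0 \<rho> i * ((\<rho> - 1) / \<rho>) else 0)
     + (if thr T0 \<rho> m \<le> x then thr T0 \<rho> m else 0)"

lemma thr_Suc: "\<rho> > 1 \<Longrightarrow> thr T0 \<rho> (Suc i) = thr T0 \<rho> i / \<rho>"
  by (simp add: thr_def field_simps)

lemma thr_pos: "T0 > 0 \<Longrightarrow> \<rho> > 1 \<Longrightarrow> thr T0 \<rho> i > 0"
  by (simp add: thr_def)

lemma thr_mono: "T0 > 0 \<Longrightarrow> \<rho> > 1 \<Longrightarrow> i \<le> j \<Longrightarrow> thr T0 \<rho> j \<le> thr T0 \<rho> i"
  unfolding thr_def by (intro divide_left_mono power_increasing) auto

lemma thr_le0: "T0 > 0 \<Longrightarrow> \<rho> > 1 \<Longrightarrow> thr T0 \<rho> i \<le> T0"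
  using thr_mono[of T0 \<rho> 0 i] by (simp add: thr_def)

lemma gf_Suc: "\<rho> > 1 \<Longrightarrow> gf T0 \<rho> (Suc m) x = gf T0 \<rho> m x - (if thr T0 \<rho> m \<le> x then thr T0 \<rho> m else 0)
   + (if thr T0 \<rho> m \<le> x then thr T0 \<rho> m - thr T0 \<rho> (Suc m) else 0)
   + (if thr T0 \<rho> (Suc m) \<le> x then thr T0 \<rho> (Suc m) else 0)"
proof -
  assume r: "\<rho> > 1"
  have "thr T0 \<rho> m * ((\<rho> - 1) / \<rho>) = thr T0 \<rho> m - thr T0 \<rho> (Suc m)"
    using r by (simp add: thr_Suc field_simps)
  thus ?thesis unfolding gf_def by simp
qed

lemma gf_props:
  assumes T0: "T0 > 0" and r: "\<rho> > 1"
  shows "(\<forall>x. x < thr T0 \<rho> m \<longrightarrow> gf T0 \<rho> m x = 0)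
       \<and> (\<forall>x. thr T0 \<rho> m \<le> x \<longrightarrow> x \<le> T0 \<longrightarrow> x \<le> \<rho> * gf T0 \<rho> m x)
       \<and> (\<forall>x. 0 \<le> x \<longrightarrow> 0 \<le> gf T0 \<rho> m x \<and> gf T0 \<rho> m x \<le> x)"
proof (induction m)
  case 0
  show ?case using r T0 by (auto simp: gf_def thr_def)
next
  case (Suc m)
  have tS: "thr T0 \<rho> (Suc m) = thr T0 \<rho> m / \<rho>" using r by (rule thr_Suc)
  have tp: "thr T0 \<rho> (Suc m) > 0" using thr_pos[OF T0 r] .
  have tl: "thr T0 \<rho> (Suc m) \<le> thr T0 \<rho> m" using thr_mono[OF T0 r, of m "Suc m"] by simp
  have tm: "thr T0 \<rho> m = \<rho> * thr T0 \<rho> (Suc m)" using tS r by simp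
  show ?case
  proof (intro conjI allI impI)
    fix x :: real assume "x < thr T0 \<rho> (Suc m)"
    thus "gf T0 \<rho> (Suc m) x = 0" using Suc.IH tl by (simp add: gf_Suc[OF r])
  next
    fix x :: real assume a: "thr T0 \<rho> (Suc m) \<le> x" "x \<le> T0"
    show "x \<le> \<rho> * gf T0 \<rho> (Suc m) x"
    proof (cases "thr T0 \<rho> m \<le> x")
      case True thus ?thesis using Suc.IH a tl by (simp add: gf_Suc[OF r])
    next
      case False thus ?thesis using Suc.IH a tm by (simp add: gf_Suc[OF r])
    qed
  next
    fix x :: real assume a: "0 \<le> x"
    have "0 \<le> gf T0 \<rho> (Suc m) x \<and> gf T0 \<rho> (Suc m) x \<le> x"
    proof (cases "thr T0 \<rho> m \<le> x")
      case True thus ?thesis using Suc.IH a tl by (simp add: gf_Suc[OF r])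
    next
      case False thus ?thesis using Suc.IH a tp by (simp add: gf_Suc[OF r])
    qed
    thus "0 \<le> gf T0 \<rho> (Suc m) x" "gf T0 \<rho> (Suc m) x \<le> x" by auto
  qed
qed

definition cntT :: "real list \<Rightarrow> real \<Rightarrow> real" where
  "cntT xs T = real (card {j. j < length xs \<and> T \<le> xs ! j})"

definition Lsum :: "real list \<Rightarrow> real \<Rightarrow> real \<Rightarrow> nat \<Rightarrow> real" where
  "Lsum xs T0 \<rho> m = (\<Sum>i<m. cntT xs (thr T0 \<rho> i) * thr T0 \<rho> i * ((\<rho> - 1) / \<rho>))"

lemma card_sum: fixes n :: nat shows "real (card {j. j < n \<and> P j}) = (\<Sum>j<n. if P j then 1 else 0)"
proof -
  have "(\<Sum>j<n. if P j then 1 else (0::real)) = (\<Sum>j<n. if j \<in> {j. P j} then 1 else 0)" by simp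
  also have "\<dots> = sum (\<lambda>_. 1) ({..<n} \<inter> {j. P j})" using sum.inter_restrict[OF finite_lessThan[of n], where g="\<lambda>_. (1::real)" and B="{j. P j}"] by simp
  also have "{..<n} \<inter> {j. P j} = {j. j < n \<and> P j}" by auto
  finally show ?thesis by simp
qed

lemma Eex_eq: "Lsum xs T0 \<rho> m + cntT xs (thr T0 \<rho> m) * thr T0 \<rho> m
   = (\<Sum>j<length xs. gf T0 \<rho> m (xs ! j))"
proof -
  have a: "(\<Sum>j<length xs. gf T0 \<rho> m (xs ! j)) =
     (\<Sum>j<length xs. \<Sum>i<m. if thr T0 \<rho> i \<le> xs ! j then thr T0 \<rho> i * ((\<rho> - 1) / \<rho>) else 0)
     + (\<Sum>j<length xs. if thr T0 \<rho> m \<le> xs ! j then thr T0 \<rho> m else 0)"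
    unfolding gf_def by (simp add: sum.distrib)
  have b: "(\<Sum>j<length xs. \<Sum>i<m. if thr T0 \<rho> i \<le> xs ! j then thr T0 \<rho> i * ((\<rho> - 1) / \<rho>) else 0)
     = (\<Sum>i<m. \<Sum>j<length xs. if thr T0 \<rho> i \<le> xs ! j then thr T0 \<rho> i * ((\<rho> - 1) / \<rho>) else 0)"
    by (rule sum.swap)
  have c: "\<And>T c. (\<Sum>j<length xs. if T \<le> xs ! j then c else 0) = cntT xs T * c"
    unfolding cntT_def card_sum sum_distrib_right by (rule sum.cong) auto
  show ?thesis unfolding a b c Lsum_def by (simp add: mult.assoc)
qed

lemma sum_list_nth: "sum_list xs = (\<Sum>j<length xs. xs ! j)"
  by (simp add: sum_list_sum_nth atLeast0LessThan)

lemma accuracy: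
  assumes srt: "sorted xs" and nn: "\<forall>x\<in>set xs. 0 \<le> x" and n1: "length xs \<ge> 1"
    and T0: "T0 = xs ! (length xs - 1)" "T0 > 0" and r: "\<rho> > 1"
    and X: "X \<le> cntT xs (thr T0 \<rho> m)" "cntT xs (thr T0 \<rho> m) \<le> \<rho> * X"
    and E: "0 \<le> Eacc" "Eacc \<le> Lsum xs T0 \<rho> m" "Lsum xs T0 \<rho> m \<le> \<rho> * Eacc"
    and R: "(\<Sum>j<length xs. if xs ! j < thr T0 \<rho> m then xs ! j else 0) \<le> (\<rho> - 1) * (Eacc + X * thr T0 \<rho> m)"
  shows "Eacc + X * thr T0 \<rho> m \<le> sum_list xs"
    and "sum_list xs \<le> (\<rho>^2 + (\<rho> - 1)) * (Eacc + X * thr T0 \<rho> m)"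
proof -
  let ?t = "thr T0 \<rho> m" let ?n = "length xs"
  have tp: "?t > 0" using thr_pos[OF T0(2) r] .
  have xj: "\<And>j. j < ?n \<Longrightarrow> 0 \<le> xs ! j \<and> xs ! j \<le> T0"
  proof -
    fix j assume j: "j < ?n"
    have "0 \<le> xs ! j" using nn j by auto
    moreover have "xs ! j \<le> xs ! (?n - 1)" using srt j by (simp add: sorted_nth_mono)
    ultimately show "0 \<le> xs ! j \<and> xs ! j \<le> T0" using T0 by simp
  qed
  note gp = gf_props[OF T0(2) r, of m]
  have Eex: "Lsum xs T0 \<rho> m + cntT xs ?t * ?t = (\<Sum>j<?n. gf T0 \<rho> m (xs ! j))" by (rule Eex_eq)
  have "Eacc + X * ?t \<le> Lsum xs T0 \<rho> m + cntT xs ?t * ?t"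
    using E X tp by (intro add_mono mult_right_mono) auto
  also have "\<dots> \<le> (\<Sum>j<?n. xs ! j)" unfolding Eex using xj gp by (intro sum_mono) auto
  finally show "Eacc + X * ?t \<le> sum_list xs" by (simp add: sum_list_nth)
  have "Lsum xs T0 \<rho> m + cntT xs ?t * ?t \<le> \<rho> * Eacc + \<rho> * X * ?t"
    using E X tp by (intro add_mono mult_right_mono) auto
  hence Eup: "(\<Sum>j<?n. gf T0 \<rho> m (xs ! j)) \<le> \<rho> * (Eacc + X * ?t)" unfolding Eex by (simp add: algebra_simps)
  have split: "(\<Sum>j<?n. xs ! j) = (\<Sum>j<?n. if ?t \<le> xs ! j then xs ! j else 0) + (\<Sum>j<?n. if xs ! j < ?t then xs ! j else 0)"
    by (simp add: sum.distrib[symmetric]) (rule sum.cong, auto)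
  have "(\<Sum>j<?n. if ?t \<le> xs ! j then xs ! j else 0) \<le> (\<Sum>j<?n. \<rho> * gf T0 \<rho> m (xs ! j))"
    using xj gp r by (intro sum_mono) auto
  also have "\<dots> \<le> \<rho> * (\<rho> * (Eacc + X * ?t))" unfolding sum_distrib_left[symmetric] using Eup r by simp
  finally have "(\<Sum>j<?n. xs ! j) \<le> \<rho> * (\<rho> * (Eacc + X * ?t)) + (\<rho> - 1) * (Eacc + X * ?t)"
    using split R by linarith
  thus "sum_list xs \<le> (\<rho>^2 + (\<rho> - 1)) * (Eacc + X * ?t)" by (simp add: sum_list_nth power2_eq_square algebra_simps)
qed



definition P :: prog where "P = [Const 2 0, Const 3 1, Const 6 4, JmpLe 1 3 6, Dvd 4 3 6, JmpLe 2 2 7, Dvd 4 1 6, Add 5 3 4, Mul 6 0 4, Add 21 0 3, JmpLe 3 6 20, Const 8 1, Const 9 0, JmpLe 21 8 18, Qry 19 8, Add 9 9 19, Add 8 8 3, JmpLe 2 2 13, Add 0 9 2, Halt, Qry 15 0, JmpLe 15 2 72, Add 10 5 2, Const 11 1, JmpLe 10 0 26, JmpLe 2 2 30, Add 6 10 2, Mul 10 10 11, Add 11 6 2, JmpLe 2 2 24, Add 12 10 2, Add 13 11 2, Const 14 1, Const 16 0, Add 10 12 2, Add 11 13 2, JmpLe 10 5 53, Mul 18 14 11, Sub 6 2 18, Flr 6 6, Add 6 21 6, Qry 19 6, JmpLe 15 19 47, Dvd 6 10 11, Add 10 11 2, Add 11 6 2, JmpLe 2 2 36, Add 14 18 2,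 Dvd 6 10 11, Dvd 7 11 6, Add 10 6 2, Add 11 7 2, JmpLe 2 2 36, Mul 6 14 15, Dvd 7 6 5, Mul 20 7 4, Add 16 16 20, Add 17 16 7, Mul 18 14 5, Sub 6 2 18, Flr 6 6, Add 6 21 6, Qry 19 6, JmpLe 19 2 69, Mul 6 0 15, Mul 7 4 17, JmpLe 6 7 69, Dvd 15 15 5, JmpLe 2 2 34, Add 6 3 1, Mul 0 6 17, Halt, Const 0 0, Halt]"
lemma P_len: "length P = 74" by (simp add: P_def)
lemma P_nth:
  "P ! 0 = Const 2 0"
  "P ! 1 = Const 3 1"
  "P ! 2 = Const 6 4"
  "P ! 3 = JmpLe 1 3 6"
  "P ! 4 = Dvd 4 3 6"
  "P ! 5 = JmpLe 2 2 7"
  "P ! 6 = Dvd 4 1 6"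
  "P ! 7 = Add 5 3 4"
  "P ! 8 = Mul 6 0 4"
  "P ! 9 = Add 21 0 3"
  "P ! 10 = JmpLe 3 6 20"
  "P ! 11 = Const 8 1"
  "P ! 12 = Const 9 0"
  "P ! 13 = JmpLe 21 8 18"
  "P ! 14 = Qry 19 8"
  "P ! 15 = Add 9 9 19"
  "P ! 16 = Add 8 8 3"
  "P ! 17 = JmpLe 2 2 13"
  "P ! 18 = Add 0 9 2"
  "P ! 19 = Halt"
  "P ! 20 = Qry 15 0"
  "P ! 21 = JmpLe 15 2 72"
  "P ! 22 = Add 10 5 2"
  "P ! 23 = Const 11 1"
  "P ! 24 = JmpLe 10 0 26"
  "P ! 25 = JmpLe 2 2 30"
  "P ! 26 = Add 6 10 2"
  "P ! 27 = Mul 10 10 11"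
  "P ! 28 = Add 11 6 2"
  "P ! 29 = JmpLe 2 2 24"
  "P ! 30 = Add 12 10 2"
  "P ! 31 = Add 13 11 2"
  "P ! 32 = Const 14 1"
  "P ! 33 = Const 16 0"
  "P ! 34 = Add 10 12 2"
  "P ! 35 = Add 11 13 2"
  "P ! 36 = JmpLe 10 5 53"
  "P ! 37 = Mul 18 14 11"
  "P ! 38 = Sub 6 2 18"
  "P ! 39 = Flr 6 6"
  "P ! 40 = Add 6 21 6"
  "P ! 41 = Qry 19 6"
  "P ! 42 = JmpLe 15 19 47"
  "P ! 43 = Dvd 6 10 11"
  "P ! 44 = Add 10 11 2"
  "P ! 45 = Add 11 6 2"
  "P ! 46 = JmpLe 2 2 36"
  "P ! 47 = Add 14 18 2"
  "P ! 48 = Dvd 6 10 11"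
  "P ! 49 = Dvd 7 11 6"
  "P ! 50 = Add 10 6 2"
  "P ! 51 = Add 11 7 2"
  "P ! 52 = JmpLe 2 2 36"
  "P ! 53 = Mul 6 14 15"
  "P ! 54 = Dvd 7 6 5"
  "P ! 55 = Mul 20 7 4"
  "P ! 56 = Add 16 16 20"
  "P ! 57 = Add 17 16 7"
  "P ! 58 = Mul 18 14 5"
  "P ! 59 = Sub 6 2 18"
  "P ! 60 = Flr 6 6"
  "P ! 61 = Add 6 21 6"
  "P ! 62 = Qry 19 6"
  "P ! 63 = JmpLe 19 2 69"
  "P ! 64 = Mul 6 0 15"
  "P ! 65 = Mul 7 4 17"
  "P ! 66 = JmpLe 6 7 69"
  "P ! 67 = Dvd 15 15 5"
  "P ! 68 = JmpLe 2 2 34"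
  "P ! 69 = Add 6 3 1"
  "P ! 70 = Mul 0 6 17"
  "P ! 71 = Halt"
  "P ! 72 = Const 0 0"
  "P ! 73 = Halt"
  by (simp_all add: P_def)

definition steps :: "real list \<Rightarrow> nat \<Rightarrow> state \<Rightarrow> state" where
  "steps xs k s = (step P xs ^^ k) s"

lemma steps_0[simp]: "steps xs 0 s = s" by (simp add: steps_def)
lemma steps_Suc: "steps xs (Suc k) s = steps xs k (step P xs s)"
  by (simp add: steps_def funpow_Suc_right del: funpow.simps)
lemma steps_add: "steps xs (a + b) s = steps xs b (steps xs a s)"
  unfolding steps_def by (metis add.commute comp_apply funpow_add)
lemma steps_num: "steps xs (numeral k) s = steps xs (pred_numeral k) (step P xs s)"
  by (simp add: numeral_eq_Suc steps_Suc)
lemma steps_1: "steps xs 1 s = step P xs s"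
  by (simp add: steps_Suc[of xs 0, simplified])

lemma step_pc: "pc < length P \<Longrightarrow> P ! pc \<noteq> Halt \<Longrightarrow> step P xs (pc, r) = exec xs (P ! pc) pc r"
  by (simp add: step_def halted_def)

lemma P_Suc0: "P ! Suc 0 = Const 3 1" by (simp add: P_def)
lemma Suc_Suc0: "Suc (Suc 0) = 2" by simp
lemmas ex = Suc_Suc0 steps_num steps_1 steps_Suc step_pc P_len P_nth P_Suc0

lemma halted_pc: "halted P (pc, r) \<longleftrightarrow> pc \<ge> length P \<or> P ! pc = Halt"
  by (simp add: halted_def)

fun fb :: "nat \<Rightarrow> nat" where
  "fb 0 = 0" | "fb (Suc 0) = 1" | "fb (Suc (Suc n)) = fb (Suc n) + fb n"

lemma fb_Suc_mono: "fb n \<le> fb (Suc n)"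
  by (induction n rule: fb.induct) auto

lemma fb_mono: "i \<le> j \<Longrightarrow> fb i \<le> fb j"
  by (induction j) (auto simp: le_Suc_eq intro: order.trans[OF _ fb_Suc_mono])

lemma fb_pos: "1 \<le> j \<Longrightarrow> 1 \<le> fb j"
  using fb_mono[of 1 j] by simp

lemma fb_exp: "2 ^ k \<le> fb (2 * k + 1)"
proof (induction k)
  case 0 then show ?case by simp
next
  case (Suc k)
  have "fb (2 * Suc k + 1) = fb (2 * k + 2) + fb (2 * k + 1)"
    by (simp add: numeral_eq_Suc)
  moreover have "fb (2 * k + 1) \<le> fb (2 * k + 2)" by (rule fb_mono) simp
  ultimately show ?case using Suc by simp
qed

definition gg :: "real \<Rightarrow> real" where "gg \<epsilon> = (if \<epsilon> \<le> 1 then \<epsilon> / 4 else 1 / 4)"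

definition frame :: "real list \<Rightarrow> real \<Rightarrow> (nat \<Rightarrow> real) \<Rightarrow> bool" where
  "frame xs \<epsilon> r \<longleftrightarrow> r 0 = real (length xs) \<and> r 1 = \<epsilon> \<and> r 2 = 0 \<and> r 3 = 1 \<and> r 4 = gg \<epsilon>
     \<and> r 5 = 1 + gg \<epsilon> \<and> r 21 = real (length xs) + 1"

lemma init_seg:
  "\<exists>k r. k \<le> 10 \<and> steps xs k (init (length xs) \<epsilon>) = (if 1 \<le> real (length xs) * gg \<epsilon> then 20 else 11, r)
     \<and> frame xs \<epsilon> r"
proof (cases "\<epsilon> \<le> 1")
  case True
  have "\<exists>r. steps xs 9 (init (length xs) \<epsilon>) = (if 1 \<le> real (length xs) * gg \<epsilon> then 20 else 11, r)
     \<and> frame xs \<epsilon> r"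
    using True by (simp add: ex init_def frame_def gg_def)
  thus ?thesis by (intro exI[of _ 9]) auto
next
  case False
  have "\<exists>r. steps xs 10 (init (length xs) \<epsilon>) = (if 1 \<le> real (length xs) * gg \<epsilon> then 20 else 11, r)
     \<and> frame xs \<epsilon> r"
    using False by (simp add: ex init_def frame_def gg_def)
  thus ?thesis by (intro exI[of _ 10]) auto
qed

lemma exact_loop:
  assumes "frame xs \<epsilon> r" "r 8 = real i" "r 9 = (\<Sum>j<i-1. xs!j)" "1 \<le> i" "i \<le> length xs + 1"
  shows "\<exists>k r'. k \<le> 5*(length xs + 1 - i) + 2 \<and> steps xs k (13, r) = (19, r') \<and> r' 0 = sum_list xs"
  using assms
proof (induction "length xs + 1 - i" arbitrary: i r)
  case 0
  hence i: "i = length xs + 1" by simp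
  have "steps xs 2 (13, r) = (19, r(0 := r 9 + r 2))"
    using 0 i by (simp add: ex frame_def)
  moreover have "r 9 + r 2 = sum_list xs" using 0 i by (simp add: frame_def sum_list_nth)
  ultimately show ?case by (intro exI[of _ 2]) auto
next
  case (Suc d)
  hence i: "i \<le> length xs" by simp
  define r' where "r' = r(19 := xs ! (i - 1), 9 := r 9 + xs ! (i - 1), 8 := r 8 + r 3)"
  have st: "steps xs 5 (13, r) = (13, r')"
    using Suc.prems i unfolding r'_def by (simp add: ex frame_def query_nat)
  have f': "frame xs \<epsilon> r'" using Suc.prems unfolding r'_def frame_def by simp
  have s': "r' 9 = (\<Sum>j<Suc i - 1. xs!j)" using Suc.prems unfolding r'_def
    by (cases i) auto
  have i': "r' 8 = real (Suc i)" using Suc.prems unfolding r'_def frame_def by simp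
  have d: "d = length xs + 1 - Suc i" using Suc.hyps(2) by simp
  have "\<exists>k r''. k \<le> 5*(length xs + 1 - Suc i) + 2 \<and> steps xs k (13, r') = (19, r'') \<and> r'' 0 = sum_list xs"
    by (rule Suc.hyps(1)[OF d f' i' s']) (use i in simp_all)
  then obtain k r'' where k: "k \<le> 5*(length xs + 1 - Suc i) + 2" "steps xs k (13, r') = (19, r'')" "r'' 0 = sum_list xs"
    by blast
  have "steps xs (5 + k) (13, r) = (19, r'')" using st k by (simp add: steps_add)
  moreover have "5 + k \<le> 5*(length xs + 1 - i) + 2" using k i Suc.prems by simp
  ultimately show ?case using k by blast
qed



lemma srch_exit: "r 10 \<le> r 5 \<Longrightarrow> steps xs 1 (36, r) = (53, r)"
  by (simp add: ex)

lemma srch_succ: "\<not> r 10 \<le> r 5 \<Longrightarrow> r 15 \<le> query xs (r 21 + of_int \<lfloor>r 2 - r 14 * r 11\<rfloor>) \<Longrightarrow>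
  \<exists>r'. steps xs 13 (36, r) = (36, r') \<and> r' 14 = r 14 * r 11 + r 2 \<and> r' 10 = r 10 / r 11 + r 2
     \<and> r' 11 = r 11 / (r 10 / r 11) + r 2 \<and> (\<forall>i. i \<notin> {6,7,10,11,14,18,19} \<longrightarrow> r' i = r i)"
  by (simp add: ex)

lemma srch_fail: "\<not> r 10 \<le> r 5 \<Longrightarrow> \<not> r 15 \<le> query xs (r 21 + of_int \<lfloor>r 2 - r 14 * r 11\<rfloor>) \<Longrightarrow>
  \<exists>r'. steps xs 11 (36, r) = (36, r') \<and> r' 14 = r 14 \<and> r' 10 = r 11 + r 2
     \<and> r' 11 = r 10 / r 11 + r 2 \<and> (\<forall>i. i \<notin> {6,7,10,11,14,18,19} \<longrightarrow> r' i = r i)"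
  by (simp add: ex)

lemma main_zero: "query xs (r 0) \<le> r 2 \<Longrightarrow> \<exists>r'. steps xs 3 (20, r) = (73, r') \<and> r' 0 = 0"
  by (simp add: ex)

lemma main_go: "\<not> query xs (r 0) \<le> r 2 \<Longrightarrow> \<exists>r'. steps xs 4 (20, r) = (24, r') \<and> r' 15 = query xs (r 0)
   \<and> r' 10 = r 5 + r 2 \<and> r' 11 = 1 \<and> (\<forall>i. i \<notin> {10,11,15} \<longrightarrow> r' i = r i)"
  by (simp add: ex)

lemma pre_body: "r 10 \<le> r 0 \<Longrightarrow> \<exists>r'. steps xs 5 (24, r) = (24, r') \<and> r' 10 = r 10 * r 11
   \<and> r' 11 = r 10 + r 2 + r 2 \<and> (\<forall>i. i \<notin> {6,10,11} \<longrightarrow> r' i = r i)"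
  by (simp add: ex)

lemma pre_exit: "\<not> r 10 \<le> r 0 \<Longrightarrow> steps xs 2 (24, r) = (30, r)"
  by (simp add: ex)

lemma setup_lv: "\<exists>r'. steps xs 4 (30, r) = (34, r') \<and> r' 12 = r 10 + r 2 \<and> r' 13 = r 11 + r 2
   \<and> r' 14 = 1 \<and> r' 16 = 0 \<and> (\<forall>i. i \<notin> {12,13,14,16} \<longrightarrow> r' i = r i)"
  by (simp add: ex)

lemma lv_start: "\<exists>r'. steps xs 2 (34, r) = (36, r') \<and> r' 10 = r 12 + r 2 \<and> r' 11 = r 13 + r 2
   \<and> (\<forall>i. i \<notin> {10,11} \<longrightarrow> r' i = r i)"
  by (simp add: ex)

lemma post_a: "query xs (r 21 + of_int \<lfloor>r 2 - r 14 * r 5\<rfloor>) \<le> r 2 \<Longrightarrow>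
  \<exists>r'. steps xs 11 (53, r) = (69, r') \<and> r' 17 = r 16 + r 14 * r 15 / r 5 * r 4 + r 14 * r 15 / r 5
     \<and> (\<forall>i. i \<notin> {6,7,16,17,18,19,20} \<longrightarrow> r' i = r i)"
  by (simp add: ex)

lemma post_b: "\<not> query xs (r 21 + of_int \<lfloor>r 2 - r 14 * r 5\<rfloor>) \<le> r 2 \<Longrightarrow>
  r 0 * r 15 \<le> r 4 * (r 16 + r 14 * r 15 / r 5 * r 4 + r 14 * r 15 / r 5) \<Longrightarrow>
  \<exists>r'. steps xs 14 (53, r) = (69, r') \<and> r' 17 = r 16 + r 14 * r 15 / r 5 * r 4 + r 14 * r 15 / r 5
     \<and> (\<forall>i. i \<notin> {6,7,16,17,18,19,20} \<longrightarrow> r' i = r i)"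
  by (simp add: ex)

lemma post_c: "\<not> query xs (r 21 + of_int \<lfloor>r 2 - r 14 * r 5\<rfloor>) \<le> r 2 \<Longrightarrow>
  \<not> r 0 * r 15 \<le> r 4 * (r 16 + r 14 * r 15 / r 5 * r 4 + r 14 * r 15 / r 5) \<Longrightarrow>
  \<exists>r'. steps xs 16 (53, r) = (34, r') \<and> r' 15 = r 15 / r 5 \<and> r' 16 = r 16 + r 14 * r 15 / r 5 * r 4
     \<and> (\<forall>i. i \<notin> {6,7,15,16,17,18,19,20} \<longrightarrow> r' i = r i)"
  by (simp add: ex)

lemma final_seg: "steps xs 2 (69, r) = (71, r(6 := r 3 + r 1, 0 := (r 3 + r 1) * r 17))"
  by (simp add: ex)



lemma gg_pos: "0 < \<epsilon> \<Longrightarrow> 0 < gg \<epsilon>" by (simp add: gg_def)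
lemma gg_le: "gg \<epsilon> \<le> 1/4" by (simp add: gg_def)
lemma gg_le_eps: "0 < \<epsilon> \<Longrightarrow> gg \<epsilon> \<le> \<epsilon> / 4" by (simp add: gg_def)

lemma fb3: "fb (Suc (Suc (Suc i))) = fb (Suc (Suc i)) + fb (Suc i)" by simp

lemma qtestT:
  assumes "sorted xs" "T > 0" "1 \<le> y"
  shows "T \<le> query xs (real (length xs) + 1 + of_int \<lfloor>- y\<rfloor>) \<longleftrightarrow> y \<le> cntT xs T"
  unfolding cntT_def using assms by (intro qtest) auto

lemma qtestP:
  assumes "sorted xs" "1 \<le> y"
  shows "0 < query xs (real (length xs) + 1 + of_int \<lfloor>- y\<rfloor>) \<longleftrightarrow> y \<le> real (card {i. i < length xs \<and> 0 < xs ! i})"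
  using assms by (intro qtest) auto

lemma search:
  fixes xs \<epsilon> T
  defines "\<rho> \<equiv> 1 + gg \<epsilon>"
  assumes srt: "sorted xs" and ep: "0 < \<epsilon>" and fr: "frame xs \<epsilon> r" and T: "r 15 = T" "T > 0"
    and A: "r 10 = \<rho> ^ fb j" "r 11 = \<rho> ^ fb (j - 1)" "1 \<le> j"
    and X: "1 \<le> r 14" "r 14 \<le> cntT xs T" "cntT xs T < r 14 * \<rho> ^ fb j"
  shows "\<exists>k r'. k \<le> 13 * j \<and> steps xs k (36, r) = (53, r') \<and> 1 \<le> r' 14 \<and> r' 14 \<le> cntT xs T
     \<and> cntT xs T < r' 14 * \<rho> \<and> (\<forall>i. i \<notin> {6,7,10,11,14,18,19} \<longrightarrow> r' i = r i)"
  using fr T A X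
proof (induction j arbitrary: r rule: less_induct)
  case (less j r)
  have rho: "1 < \<rho>" unfolding \<rho>_def using gg_pos[OF ep] by simp
  have r5: "r 5 = \<rho>" "r 2 = 0" "r 21 = real (length xs) + 1" using less.prems(1) unfolding frame_def \<rho>_def by auto
  show ?case
  proof (cases "r 10 \<le> r 5")
    case True
    have "\<rho> ^ fb j \<le> \<rho> ^ 1" using True less.prems r5 by simp
    hence "fb j \<le> 1" using rho power_le_imp_le_exp by blast
    moreover have "1 \<le> fb j" using fb_pos less.prems by simp
    ultimately have "fb j = 1" by simp
    hence "cntT xs T < r 14 * \<rho>" using less.prems by simp
    thus ?thesis using srch_exit[OF True, of xs] less.prems
      by (intro exI[of _ 1] exI[of _ r]) auto
  next
    case False
    have "\<not> fb j \<le> 1"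
    proof
      assume "fb j \<le> 1"
      hence "\<rho> ^ fb j \<le> \<rho> ^ 1" using rho by (intro power_increasing) auto
      thus False using False less.prems r5 by simp
    qed
    then obtain i where j: "j = Suc (Suc (Suc i))"
      by (cases j rule: fb.cases; cases "j - 2") (auto simp: numeral_eq_Suc)
    define a where "a = fb (Suc (Suc i))"
    define b where "b = fb (Suc i)"
    define c where "c = fb i"
    have fj: "fb j = a + b" "a = b + c" unfolding a_def b_def c_def j by simp_all
    have A': "r 10 = \<rho> ^ (a + b)" "r 11 = \<rho> ^ a" using less.prems fj j a_def by auto
    have rnz: "\<rho> \<noteq> 0" using rho by simp
    define y where "y = r 14 * \<rho> ^ a"
    have y1: "1 \<le> y" unfolding y_def using less.prems rho by (simp add: one_le_power order.trans[OF _ mult_right_mono[of 1]])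
    have yc: "r 15 \<le> query xs (r 21 + of_int \<lfloor>r 2 - r 14 * r 11\<rfloor>) \<longleftrightarrow> y \<le> cntT xs T"
    proof -
      have "r 21 + of_int \<lfloor>r 2 - r 14 * r 11\<rfloor> = real (length xs) + 1 + of_int \<lfloor>- y\<rfloor>"
        using r5 A' unfolding y_def by simp
      thus ?thesis using qtestT[OF srt less.prems(3) y1] less.prems(2) by simp
    qed
    show ?thesis
    proof (cases "y \<le> cntT xs T")
      case True
      obtain r' where r': "steps xs 13 (36, r) = (36, r')" "r' 14 = r 14 * r 11 + r 2" "r' 10 = r 10 / r 11 + r 2"
        "r' 11 = r 11 / (r 10 / r 11) + r 2" "\<forall>i. i \<notin> {6,7,10,11,14,18,19} \<longrightarrow> r' i = r i"
        using srch_succ[OF False, of xs] yc True by blast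
      have v: "r' 14 = y" "r' 10 = \<rho> ^ b" "r' 11 = \<rho> ^ c"
        using r' A' r5 rnz unfolding y_def fj by (simp_all add: power_add)
      have fr': "frame xs \<epsilon> r'" using less.prems(1) r'(5) unfolding frame_def by simp
      have "\<exists>k r''. k \<le> 13 * Suc i \<and> steps xs k (36, r') = (53, r'') \<and> 1 \<le> r'' 14 \<and> r'' 14 \<le> cntT xs T
        \<and> cntT xs T < r'' 14 * \<rho> \<and> (\<forall>i. i \<notin> {6,7,10,11,14,18,19} \<longrightarrow> r'' i = r' i)"
      proof (rule less.IH)
        show "Suc i < j" using j by simp
        show "frame xs \<epsilon> r'" by (rule fr')
        show "r' 15 = T" using r'(5) less.prems by simp
        show "T > 0" using less.prems by simp
        show "r' 10 = \<rho> ^ fb (Suc i)" using v b_def by simp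
        show "r' 11 = \<rho> ^ fb (Suc i - 1)" using v c_def by simp
        show "1 \<le> Suc i" by simp
        show "1 \<le> r' 14" using v y1 by simp
        show "r' 14 \<le> cntT xs T" using v True by simp
        show "cntT xs T < r' 14 * \<rho> ^ fb (Suc i)"
          using v less.prems(9) fj unfolding y_def b_def by (simp add: power_add mult.assoc)
      qed
      then obtain k r'' where k: "k \<le> 13 * Suc i" "steps xs k (36, r') = (53, r'')" "1 \<le> r'' 14" "r'' 14 \<le> cntT xs T"
        "cntT xs T < r'' 14 * \<rho>" "\<forall>i. i \<notin> {6,7,10,11,14,18,19} \<longrightarrow> r'' i = r' i" by blast
      show ?thesis
      proof (intro exI conjI)
        show "steps xs (13 + k) (36, r) = (53, r'')" using r'(1) k(2) by (simp add: steps_add)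
        show "13 + k \<le> 13 * j" using k(1) j by simp
        show "\<forall>i. i \<notin> {6,7,10,11,14,18,19} \<longrightarrow> r'' i = r i" using k(6) r'(5) by simp
      qed (use k in auto)
    next
      case False2: False
      obtain r' where r': "steps xs 11 (36, r) = (36, r')" "r' 14 = r 14" "r' 10 = r 11 + r 2"
        "r' 11 = r 10 / r 11 + r 2" "\<forall>i. i \<notin> {6,7,10,11,14,18,19} \<longrightarrow> r' i = r i"
        using srch_fail[OF False, of xs] yc False2 by blast
      have v: "r' 14 = r 14" "r' 10 = \<rho> ^ a" "r' 11 = \<rho> ^ b"
        using r' A' r5 rnz unfolding fj by (simp_all add: power_add)
      have fr': "frame xs \<epsilon> r'" using less.prems(1) r'(5) unfolding frame_def by simp
      have "\<exists>k r''. k \<le> 13 * Suc (Suc i) \<and> steps xs k (36, r') = (53, r'') \<and> 1 \<le> r'' 14 \<and> r'' 14 \<le> cntT xs T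
        \<and> cntT xs T < r'' 14 * \<rho> \<and> (\<forall>i. i \<notin> {6,7,10,11,14,18,19} \<longrightarrow> r'' i = r' i)"
      proof (rule less.IH)
        show "Suc (Suc i) < j" using j by simp
        show "frame xs \<epsilon> r'" by (rule fr')
        show "r' 15 = T" using r'(5) less.prems by simp
        show "T > 0" using less.prems by simp
        show "r' 10 = \<rho> ^ fb (Suc (Suc i))" using v a_def by simp
        show "r' 11 = \<rho> ^ fb (Suc (Suc i) - 1)" using v b_def by simp
        show "1 \<le> Suc (Suc i)" by simp
        show "1 \<le> r' 14" using v less.prems by simp
        show "r' 14 \<le> cntT xs T" using v less.prems by simp
        show "cntT xs T < r' 14 * \<rho> ^ fb (Suc (Suc i))"
          using v False2 unfolding y_def a_def by simp
      qed
      then obtain k r'' where k: "k \<le> 13 * Suc (Suc i)" "steps xs k (36, r') = (53, r'')" "1 \<le> r'' 14" "r'' 14 \<le> cntT xs T"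
        "cntT xs T < r'' 14 * \<rho>" "\<forall>i. i \<notin> {6,7,10,11,14,18,19} \<longrightarrow> r'' i = r' i" by blast
      show ?thesis
      proof (intro exI conjI)
        show "steps xs (11 + k) (36, r) = (53, r'')" using r'(1) k(2) by (simp add: steps_add)
        show "11 + k \<le> 13 * j" using k(1) j by simp
        show "\<forall>i. i \<notin> {6,7,10,11,14,18,19} \<longrightarrow> r'' i = r i" using k(6) r'(5) by simp
      qed (use k in auto)
    qed
  qed
qed



lemma R_le_a:
  assumes nn: "\<forall>x\<in>set xs. 0 \<le> x" and T: "T > 0"
  shows "(\<Sum>j<length xs. if xs ! j < T then xs ! j else 0)
     \<le> T * (real (card {i. i < length xs \<and> 0 < xs ! i}) - cntT xs T)"
proof -
  have "(\<Sum>j<length xs. if xs ! j < T then xs ! j else 0)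
     \<le> (\<Sum>j<length xs. T * ((if 0 < xs ! j then 1 else 0) - (if T \<le> xs ! j then 1 else 0)))"
  proof (rule sum_mono)
    fix j assume "j \<in> {..<length xs}"
    hence "0 \<le> xs ! j" using nn by auto
    thus "(if xs ! j < T then xs ! j else 0) \<le> T * ((if 0 < xs ! j then 1 else 0) - (if T \<le> xs ! j then 1 else 0))"
      using T by auto
  qed
  also have "\<dots> = T * (real (card {i. i < length xs \<and> 0 < xs ! i}) - cntT xs T)"
    unfolding cntT_def card_sum sum_distrib_left[symmetric] sum_subtractf by simp
  finally show ?thesis .
qed

lemma R_le_b:
  assumes nn: "\<forall>x\<in>set xs. 0 \<le> x" and T: "0 \<le> T"
  shows "(\<Sum>j<length xs. if xs ! j < T then xs ! j else 0) \<le> real (length xs) * T"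
proof -
  have "(\<Sum>j<length xs. if xs ! j < T then xs ! j else 0) \<le> (\<Sum>j<length xs. T)"
  proof (rule sum_mono)
    fix j assume "j \<in> {..<length xs}"
    hence "0 \<le> xs ! j" using nn by auto
    show "(if xs ! j < T then xs ! j else 0) \<le> T" using \<open>0 \<le> xs ! j\<close> T by auto
  qed
  thus ?thesis by simp
qed

lemma cntT_mono: "T' \<le> T \<Longrightarrow> cntT xs T \<le> cntT xs T'"
  unfolding cntT_def by (intro of_nat_mono card_mono) auto

lemma cntT_le: "cntT xs T \<le> real (length xs)"
proof -
  have "card {j. j < length xs \<and> T \<le> xs ! j} \<le> card {..<length xs}" by (intro card_mono) auto
  thus ?thesis unfolding cntT_def by simp
qed

lemma Lsum_Suc: "Lsum xs T0 \<rho> (Suc m) = Lsum xs T0 \<rho> m + cntT xs (thr T0 \<rho> m) * thr T0 \<rho> m * ((\<rho> - 1) / \<rho>)"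
  by (simp add: Lsum_def)

lemma precomp:
  fixes xs \<epsilon>
  defines "\<rho> \<equiv> 1 + gg \<epsilon>"
  assumes ep: "0 < \<epsilon>" and fr: "frame xs \<epsilon> r" and A: "r 10 = \<rho> ^ fb j" "r 11 = \<rho> ^ fb (j - 1)" "1 \<le> j"
    and Jb: "j \<le> Jb" "real (length xs) < \<rho> ^ fb Jb"
  shows "\<exists>k r' J. k \<le> 5 * (Jb - j) + 2 \<and> steps xs k (24, r) = (30, r') \<and> r' 10 = \<rho> ^ fb J \<and> r' 11 = \<rho> ^ fb (J - 1)
    \<and> 1 \<le> J \<and> J \<le> Jb \<and> real (length xs) < \<rho> ^ fb J \<and> (\<forall>i. i \<notin> {6,10,11} \<longrightarrow> r' i = r i)"
  using fr A Jb(1)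
proof (induction "Jb - j" arbitrary: j r)
  case 0
  hence j: "j = Jb" by simp
  have "\<not> r 10 \<le> r 0" using 0 j Jb(2) unfolding frame_def by simp
  from pre_exit[OF this, of xs] show ?case using 0 j Jb(2) by (intro exI[of _ 2] exI[of _ r] exI[of _ j]) auto
next
  case (Suc d)
  have rho: "1 < \<rho>" unfolding \<rho>_def using gg_pos[OF ep] by simp
  show ?case
  proof (cases "r 10 \<le> r 0")
    case False
    from pre_exit[OF this, of xs] show ?thesis using Suc.prems False unfolding frame_def
      by (intro exI[of _ 2] exI[of _ r] exI[of _ j]) auto
  next
    case True
    obtain r' where r': "steps xs 5 (24, r) = (24, r')" "r' 10 = r 10 * r 11"
      "r' 11 = r 10 + r 2 + r 2" "\<forall>i. i \<notin> {6,10,11} \<longrightarrow> r' i = r i"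
      using pre_body[OF True, of xs] by blast
    obtain j0 where j0: "j = Suc j0" using Suc.prems by (cases j) auto
    have fj: "fb (Suc j) = fb j + fb (j - 1)" using j0 by (cases j0) auto
    have v: "r' 10 = \<rho> ^ fb (Suc j)" "r' 11 = \<rho> ^ fb (Suc j - 1)"
      using r' Suc.prems fj unfolding frame_def by (simp_all add: power_add)
    have jlt: "j < Jb"
    proof (rule ccontr)
      assume "\<not> j < Jb"
      hence "fb Jb \<le> fb j" by (intro fb_mono) simp
      hence "\<rho> ^ fb Jb \<le> \<rho> ^ fb j" using rho by (intro power_increasing) auto
      thus False using True Suc.prems Jb(2) unfolding frame_def by simp
    qed
    have fr': "frame xs \<epsilon> r'" using Suc.prems(1) r'(4) unfolding frame_def by simp
    have "\<exists>k r'' J. k \<le> 5 * (Jb - Suc j) + 2 \<and> steps xs k (24, r') = (30, r'') \<and> r'' 10 = \<rho> ^ fb J \<and> r'' 11 = \<rho> ^ fb (J - 1)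
      \<and> 1 \<le> J \<and> J \<le> Jb \<and> real (length xs) < \<rho> ^ fb J \<and> (\<forall>i. i \<notin> {6,10,11} \<longrightarrow> r'' i = r' i)"
      by (rule Suc.hyps(1)) (use Suc.hyps(2) fr' v jlt in auto)
    then obtain k r'' J where k: "k \<le> 5 * (Jb - Suc j) + 2" "steps xs k (24, r') = (30, r'')" "r'' 10 = \<rho> ^ fb J" "r'' 11 = \<rho> ^ fb (J - 1)"
      "1 \<le> J" "J \<le> Jb" "real (length xs) < \<rho> ^ fb J" "\<forall>i. i \<notin> {6,10,11} \<longrightarrow> r'' i = r' i" by blast
    show ?thesis
    proof (intro exI conjI)
      show "steps xs (5 + k) (24, r) = (30, r'')" using r'(1) k(2) by (simp add: steps_add)
      show "5 + k \<le> 5 * (Jb - j) + 2" using k(1) jlt by simp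
      show "\<forall>i. i \<notin> {6,10,11} \<longrightarrow> r'' i = r i" using k(8) r'(4) by simp
    qed (use k in auto)
  qed
qed



definition LI :: "real list \<Rightarrow> real \<Rightarrow> real \<Rightarrow> nat \<Rightarrow> nat \<Rightarrow> (nat \<Rightarrow> real) \<Rightarrow> bool" where
  "LI xs \<epsilon> T0 J m r \<longleftrightarrow> frame xs \<epsilon> r \<and> r 12 = (1 + gg \<epsilon>) ^ fb J \<and> r 13 = (1 + gg \<epsilon>) ^ fb (J - 1) \<and> 1 \<le> J
    \<and> real (length xs) < (1 + gg \<epsilon>) ^ fb J \<and> r 15 = thr T0 (1 + gg \<epsilon>) m \<and> 1 \<le> r 14
    \<and> r 14 \<le> cntT xs (thr T0 (1 + gg \<epsilon>) m) \<and> 0 \<le> r 16 \<and> r 16 \<le> Lsum xs T0 (1 + gg \<epsilon>) m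
    \<and> Lsum xs T0 (1 + gg \<epsilon>) m \<le> (1 + gg \<epsilon>) * r 16 \<and> (1 \<le> m \<longrightarrow> gg \<epsilon> * T0 / (1 + gg \<epsilon>) \<le> r 16)"

definition Gd :: "real list \<Rightarrow> real \<Rightarrow> real \<Rightarrow> nat \<Rightarrow> bool" where
  "Gd xs \<epsilon> T0 m \<longleftrightarrow> (\<forall>x\<in>set xs. 0 < x \<longrightarrow> thr T0 (1 + gg \<epsilon>) m \<le> x)
     \<or> (1 \<le> m \<and> real (length xs) * thr T0 (1 + gg \<epsilon>) m \<le> gg \<epsilon> * (gg \<epsilon> * T0 / (1 + gg \<epsilon>)))"

definition FIN :: "real list \<Rightarrow> real \<Rightarrow> (nat \<Rightarrow> real) \<Rightarrow> bool" where
  "FIN xs \<epsilon> r \<longleftrightarrow> frame xs \<epsilon> r \<and> r 17 \<le> sum_list xs \<and> sum_list xs \<le> ((1 + gg \<epsilon>)^2 + gg \<epsilon>) * r 17"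

lemma one_level:
  fixes xs \<epsilon> T0 J m r
  defines "\<rho> \<equiv> 1 + gg \<epsilon>"
  assumes srt: "sorted xs" and nn: "\<forall>x\<in>set xs. 0 \<le> x" and ep: "0 < \<epsilon>" and n1: "1 \<le> length xs"
    and T0: "T0 = xs ! (length xs - 1)" "T0 > 0" and L: "LI xs \<epsilon> T0 J m r"
  shows "\<exists>k r'. k \<le> 13 * J + 18 \<and> ((steps xs k (34, r) = (69, r') \<and> FIN xs \<epsilon> r')
     \<or> (steps xs k (34, r) = (34, r') \<and> LI xs \<epsilon> T0 J (Suc m) r' \<and> \<not> Gd xs \<epsilon> T0 m))"
proof -
  have rho: "1 < \<rho>" unfolding \<rho>_def using gg_pos[OF ep] by simp
  have gpos: "0 < gg \<epsilon>" using gg_pos[OF ep] .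
  define T where "T = thr T0 \<rho> m"
  have Tp: "0 < T" unfolding T_def using thr_pos[OF T0(2) rho] .
  have Lr: "frame xs \<epsilon> r" "r 12 = \<rho> ^ fb J" "r 13 = \<rho> ^ fb (J - 1)" "1 \<le> J" "real (length xs) < \<rho> ^ fb J"
    "r 15 = T" "1 \<le> r 14" "r 14 \<le> cntT xs T" "0 \<le> r 16" "r 16 \<le> Lsum xs T0 \<rho> m" "Lsum xs T0 \<rho> m \<le> \<rho> * r 16"
    "1 \<le> m \<longrightarrow> gg \<epsilon> * T0 / \<rho> \<le> r 16"
    using L unfolding LI_def T_def \<rho>_def by auto
  obtain r1 where r1: "steps xs 2 (34, r) = (36, r1)" "r1 10 = r 12 + r 2" "r1 11 = r 13 + r 2"
    "\<forall>i. i \<notin> {10,11} \<longrightarrow> r1 i = r i" using lv_start by blast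
  have fr1: "frame xs \<epsilon> r1" using Lr(1) r1(4) unfolding frame_def by simp
  have "cntT xs T < r1 14 * \<rho> ^ fb J"
  proof -
    have "cntT xs T < \<rho> ^ fb J" using cntT_le[of xs T] Lr(5) by linarith
    also have "\<dots> \<le> r1 14 * \<rho> ^ fb J" using r1(4) Lr(7) rho by simp
    finally show ?thesis .
  qed
  then obtain k1 r2 where r2: "k1 \<le> 13 * J" "steps xs k1 (36, r1) = (53, r2)" "1 \<le> r2 14" "r2 14 \<le> cntT xs T"
     "cntT xs T < r2 14 * \<rho>" "\<forall>i. i \<notin> {6,7,10,11,14,18,19} \<longrightarrow> r2 i = r1 i"
    using search[OF srt ep fr1, of T J] r1 Lr Tp frame_def unfolding \<rho>_def by auto
  define X where "X = r2 14"
  define E where "E = r 16"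
  have fr2: "frame xs \<epsilon> r2" using fr1 r2(6) unfolding frame_def by simp
  have r2v: "r2 0 = real (length xs)" "r2 2 = 0" "r2 4 = gg \<epsilon>" "r2 5 = \<rho>" "r2 15 = T" "r2 16 = E"
     "r2 21 = real (length xs) + 1" "r2 12 = r 12" "r2 13 = r 13"
    using fr2 r2(6) r1(4) Lr(6) unfolding frame_def \<rho>_def E_def by auto
  define Ef where "Ef = E + X * T / \<rho> * gg \<epsilon> + X * T / \<rho>"
  have Ef: "Ef = E + X * T"
  proof -
    have "X * T / \<rho> * gg \<epsilon> + X * T / \<rho> = X * T * ((1 + gg \<epsilon>) / \<rho>)" by (simp add: algebra_simps add_divide_distrib)
    also have "(1 + gg \<epsilon>) / \<rho> = 1" using rho unfolding \<rho>_def by simp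
    finally show ?thesis unfolding Ef_def by simp
  qed
  have X1: "1 \<le> X" "X \<le> cntT xs T" "cntT xs T < X * \<rho>" using r2 X_def by auto
  have E0: "0 \<le> E" using Lr E_def by simp
  have XT: "0 \<le> X * T" using X1 Tp by simp
  define c where "c = query xs (r2 21 + of_int \<lfloor>r2 2 - r2 14 * r2 5\<rfloor>)"
  have c_eq: "0 < c \<longleftrightarrow> X * \<rho> \<le> real (card {i. i < length xs \<and> 0 < xs ! i})"
  proof -
    have "r2 21 + of_int \<lfloor>r2 2 - r2 14 * r2 5\<rfloor> = real (length xs) + 1 + of_int \<lfloor>- (X * \<rho>)\<rfloor>"
      using r2v X_def by simp
    moreover have "1 \<le> X * \<rho>" using X1 rho by (simp add: one_le_mult_iff)
    ultimately show ?thesis unfolding c_def using qtestP[OF srt] by simp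
  qed
  have acc: "R \<le> gg \<epsilon> * Ef \<Longrightarrow> R = (\<Sum>j<length xs. if xs ! j < T then xs ! j else 0) \<Longrightarrow>
      Ef \<le> sum_list xs \<and> sum_list xs \<le> (\<rho>^2 + gg \<epsilon>) * Ef" for R
  proof -
    assume R: "R \<le> gg \<epsilon> * Ef" "R = (\<Sum>j<length xs. if xs ! j < T then xs ! j else 0)"
    have g: "gg \<epsilon> = \<rho> - 1" unfolding \<rho>_def by simp
    have a1: "X \<le> cntT xs (thr T0 \<rho> m)" "cntT xs (thr T0 \<rho> m) \<le> \<rho> * X"
      using X1 T_def by (auto simp: mult.commute)
    have "(\<Sum>j<length xs. if xs ! j < thr T0 \<rho> m then xs ! j else 0) \<le> (\<rho> - 1) * (E + X * thr T0 \<rho> m)"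
      using R Ef g T_def by simp
    from accuracy[OF srt nn n1 T0 rho a1 E0 Lr(10)[folded E_def] Lr(11)[folded E_def] this]
    show ?thesis using Ef g T_def by simp
  qed
  show ?thesis
  proof (cases "c \<le> r2 2")
    case True
    obtain r3 where r3: "steps xs 11 (53, r2) = (69, r3)" "r3 17 = r2 16 + r2 14 * r2 15 / r2 5 * r2 4 + r2 14 * r2 15 / r2 5"
      "\<forall>i. i \<notin> {6,7,16,17,18,19,20} \<longrightarrow> r3 i = r2 i" using post_a[of xs r2] True unfolding c_def by blast
    have e3: "r3 17 = Ef" using r3(2) r2v unfolding Ef_def X_def by (simp add: mult.commute)
    have "real (card {i. i < length xs \<and> 0 < xs ! i}) < X * \<rho>" using c_eq True r2v by linarith
    hence "(\<Sum>j<length xs. if xs ! j < T then xs ! j else 0) \<le> T * (X * \<rho> - X)"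
      using R_le_a[OF nn Tp] X1 Tp by (smt (verit) mult_left_mono)
    also have "\<dots> = gg \<epsilon> * (X * T)" unfolding \<rho>_def by (simp add: algebra_simps)
    also have "\<dots> \<le> gg \<epsilon> * Ef" using Ef E0 gpos by simp
    finally have "Ef \<le> sum_list xs \<and> sum_list xs \<le> (\<rho>^2 + gg \<epsilon>) * Ef" using acc by blast
    moreover have "frame xs \<epsilon> r3" using fr2 r3(3) unfolding frame_def by simp
    moreover have "steps xs (2 + k1 + 11) (34, r) = (69, r3)" by (simp only: steps_add[of xs "2 + k1"] steps_add[of xs 2 k1] r1(1) r2(2) r3(1))
    ultimately show ?thesis using e3 r2(1) unfolding FIN_def \<rho>_def
      by (intro exI[of _ "2 + k1 + 11"] exI[of _ r3]) auto
  next
    case False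
    have cpos: "X * \<rho> \<le> real (card {i. i < length xs \<and> 0 < xs ! i})" using c_eq False r2v by simp
    show ?thesis
    proof (cases "r2 0 * r2 15 \<le> r2 4 * (r2 16 + r2 14 * r2 15 / r2 5 * r2 4 + r2 14 * r2 15 / r2 5)")
      case True2: True
      obtain r3 where r3: "steps xs 14 (53, r2) = (69, r3)" "r3 17 = r2 16 + r2 14 * r2 15 / r2 5 * r2 4 + r2 14 * r2 15 / r2 5"
        "\<forall>i. i \<notin> {6,7,16,17,18,19,20} \<longrightarrow> r3 i = r2 i" using post_b[of xs r2] False True2 unfolding c_def by blast
      have e3: "r3 17 = Ef" using r3(2) r2v unfolding Ef_def X_def by (simp add: mult.commute)
      have nT: "real (length xs) * T \<le> gg \<epsilon> * Ef" using True2 r2v unfolding Ef_def X_def by (simp add: mult.commute)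
      have "(\<Sum>j<length xs. if xs ! j < T then xs ! j else 0) \<le> gg \<epsilon> * Ef"
        using R_le_b[OF nn, of T] Tp nT by simp
      hence "Ef \<le> sum_list xs \<and> sum_list xs \<le> (\<rho>^2 + gg \<epsilon>) * Ef" using acc by blast
      moreover have "frame xs \<epsilon> r3" using fr2 r3(3) unfolding frame_def by simp
      moreover have "steps xs (2 + k1 + 14) (34, r) = (69, r3)" by (simp only: steps_add[of xs "2 + k1"] steps_add[of xs 2 k1] r1(1) r2(2) r3(1))
      ultimately show ?thesis using e3 r2(1) unfolding FIN_def \<rho>_def
        by (intro exI[of _ "2 + k1 + 14"] exI[of _ r3]) auto
    next
      case False2: False
      obtain r3 where r3: "steps xs 16 (53, r2) = (34, r3)" "r3 15 = r2 15 / r2 5" "r3 16 = r2 16 + r2 14 * r2 15 / r2 5 * r2 4"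
        "\<forall>i. i \<notin> {6,7,15,16,17,18,19,20} \<longrightarrow> r3 i = r2 i" using post_c[of xs r2] False False2 unfolding c_def by blast
      have nT: "\<not> real (length xs) * T \<le> gg \<epsilon> * Ef" using False2 r2v unfolding Ef_def X_def by (simp add: mult.commute)
      define E' where "E' = E + X * T / \<rho> * gg \<epsilon>"
      have e3: "r3 16 = E'" "r3 15 = T / \<rho>" "r3 14 = X" using r3 r2v unfolding E'_def X_def by (auto simp: mult.commute)
      have notG: "\<not> Gd xs \<epsilon> T0 m"
      proof
        assume "Gd xs \<epsilon> T0 m"
        hence "(\<forall>x\<in>set xs. 0 < x \<longrightarrow> T \<le> x) \<or> (1 \<le> m \<and> real (length xs) * T \<le> gg \<epsilon> * (gg \<epsilon> * T0 / \<rho>))"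
          unfolding Gd_def T_def \<rho>_def by simp
        thus False
        proof
          assume a: "\<forall>x\<in>set xs. 0 < x \<longrightarrow> T \<le> x"
          have "{i. i < length xs \<and> 0 < xs ! i} = {j. j < length xs \<and> T \<le> xs ! j}"
            using a Tp by (auto simp: nth_mem)
          hence "real (card {i. i < length xs \<and> 0 < xs ! i}) = cntT xs T" unfolding cntT_def by simp
          thus False using cpos X1 by simp
        next
          assume b: "1 \<le> m \<and> real (length xs) * T \<le> gg \<epsilon> * (gg \<epsilon> * T0 / \<rho>)"
          have "gg \<epsilon> * T0 / \<rho> \<le> E" using b Lr(12) E_def by simp
          hence "gg \<epsilon> * (gg \<epsilon> * T0 / \<rho>) \<le> gg \<epsilon> * Ef" using Ef XT gpos by (intro mult_left_mono) auto
          thus False using b nT by linarith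
        qed
      qed
      have fr3: "frame xs \<epsilon> r3" using fr2 r3(4) unfolding frame_def by simp
      have thrS: "thr T0 \<rho> (Suc m) = T / \<rho>" unfolding T_def using thr_Suc[OF rho] .
      have LS: "Lsum xs T0 \<rho> (Suc m) = Lsum xs T0 \<rho> m + cntT xs T * T * (gg \<epsilon> / \<rho>)"
        unfolding Lsum_Suc T_def \<rho>_def by simp
      have cT: "cntT xs T \<le> cntT xs (T / \<rho>)" using Tp rho by (intro cntT_mono) (simp add: divide_le_eq)
      have LI': "LI xs \<epsilon> T0 J (Suc m) r3"
        unfolding LI_def
      proof (intro conjI impI)
        show "frame xs \<epsilon> r3" by (rule fr3)
        show "r3 12 = (1 + gg \<epsilon>) ^ fb J" "r3 13 = (1 + gg \<epsilon>) ^ fb (J - 1)"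
          using r3(4) r2v r2(6) Lr unfolding \<rho>_def by auto
        show "1 \<le> J" "real (length xs) < (1 + gg \<epsilon>) ^ fb J" using Lr unfolding \<rho>_def by auto
        show "r3 15 = thr T0 (1 + gg \<epsilon>) (Suc m)" using e3 thrS \<rho>_def by simp
        show "1 \<le> r3 14" using e3 X1 by simp
        show "r3 14 \<le> cntT xs (thr T0 (1 + gg \<epsilon>) (Suc m))" using e3 X1 cT thrS \<rho>_def by simp
        have t1: "0 \<le> X * T / \<rho> * gg \<epsilon>" using XT rho gpos by simp
        show "0 \<le> r3 16" using e3 E0 t1 unfolding E'_def by simp
        have t2: "X * T / \<rho> * gg \<epsilon> \<le> cntT xs T * T * (gg \<epsilon> / \<rho>)"
          using X1 Tp rho gpos by (simp add: mult_right_mono divide_right_mono)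
        show "r3 16 \<le> Lsum xs T0 (1 + gg \<epsilon>) (Suc m)"
          using e3 LS Lr(10) t2 unfolding E'_def E_def \<rho>_def by simp
        have t3: "cntT xs T * T * (gg \<epsilon> / \<rho>) \<le> \<rho> * (X * T / \<rho> * gg \<epsilon>)"
        proof -
          have "cntT xs T * T * (gg \<epsilon> / \<rho>) \<le> (X * \<rho>) * T * (gg \<epsilon> / \<rho>)"
            using X1 Tp rho gpos by (intro mult_right_mono) auto
          also have "\<dots> = \<rho> * (X * T / \<rho> * gg \<epsilon>)" by simp
          finally show ?thesis .
        qed
        show "Lsum xs T0 (1 + gg \<epsilon>) (Suc m) \<le> (1 + gg \<epsilon>) * r3 16"
          using e3 LS Lr(11) t3 unfolding E'_def E_def \<rho>_def by (simp add: algebra_simps)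
        show "gg \<epsilon> * T0 / (1 + gg \<epsilon>) \<le> r3 16"
        proof (cases m)
          case 0
          have "T = T0" unfolding T_def 0 thr_def by simp
          hence "gg \<epsilon> * T0 / \<rho> \<le> X * T / \<rho> * gg \<epsilon>" using X1 T0 rho gpos
            by (simp add: divide_right_mono mult_right_mono)
          thus ?thesis using e3 E0 unfolding E'_def \<rho>_def by simp
        next
          case (Suc m')
          thus ?thesis using e3 Lr(12) t1 unfolding E'_def E_def \<rho>_def by simp
        qed
      qed
      have "steps xs (2 + k1 + 16) (34, r) = (34, r3)" by (simp only: steps_add[of xs "2 + k1"] steps_add[of xs 2 k1] r1(1) r2(2) r3(1))
      thus ?thesis using LI' notG r2(1) by (intro exI[of _ "2 + k1 + 16"] exI[of _ r3]) auto
    qed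
  qed
qed



lemma levels:
  fixes xs \<epsilon> T0 J m0
  assumes srt: "sorted xs" and nn: "\<forall>x\<in>set xs. 0 \<le> x" and ep: "0 < \<epsilon>" and n1: "1 \<le> length xs"
    and T0: "T0 = xs ! (length xs - 1)" "T0 > 0" and G: "Gd xs \<epsilon> T0 m0"
  shows "LI xs \<epsilon> T0 J m r \<Longrightarrow> m \<le> m0 \<Longrightarrow> \<exists>k r'. k \<le> (m0 - m + 1) * (13 * J + 18)
     \<and> steps xs k (34, r) = (69, r') \<and> FIN xs \<epsilon> r'"
proof (induction "m0 - m" arbitrary: m r)
  case 0
  obtain k r' where k: "k \<le> 13 * J + 18" "(steps xs k (34, r) = (69, r') \<and> FIN xs \<epsilon> r')
     \<or> (steps xs k (34, r) = (34, r') \<and> LI xs \<epsilon> T0 J (Suc m) r' \<and> \<not> Gd xs \<epsilon> T0 m)"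
    using one_level[OF srt nn ep n1 T0 0(2)] by blast
  have "m = m0" using 0 by simp
  hence "steps xs k (34, r) = (69, r') \<and> FIN xs \<epsilon> r'" using k(2) G by auto
  thus ?case using k(1) by (intro exI[of _ k] exI[of _ r']) simp
next
  case (Suc d)
  obtain k r' where k: "k \<le> 13 * J + 18" "(steps xs k (34, r) = (69, r') \<and> FIN xs \<epsilon> r')
     \<or> (steps xs k (34, r) = (34, r') \<and> LI xs \<epsilon> T0 J (Suc m) r' \<and> \<not> Gd xs \<epsilon> T0 m)"
    using one_level[OF srt nn ep n1 T0 Suc(3)] by blast
  show ?case
  proof (cases "steps xs k (34, r) = (69, r') \<and> FIN xs \<epsilon> r'")
    case True
    thus ?thesis using k(1) by (intro exI[of _ k] exI[of _ r']) (auto intro: order.trans[OF _ mult_le_mono1[of 1]])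
  next
    case False
    hence st: "steps xs k (34, r) = (34, r')" "LI xs \<epsilon> T0 J (Suc m) r'" using k(2) by auto
    have "d = m0 - Suc m" "Suc m \<le> m0" using Suc by auto
    from Suc.hyps(1)[OF this(1) st(2) this(2)]
    obtain k2 r2 where k2: "k2 \<le> (m0 - Suc m + 1) * (13 * J + 18)" "steps xs k2 (34, r') = (69, r2)" "FIN xs \<epsilon> r2"
      by blast
    have "steps xs (k + k2) (34, r) = (69, r2)" using st(1) k2(2) by (simp add: steps_add)
    moreover have "k + k2 \<le> (m0 - m + 1) * (13 * J + 18)"
    proof -
      have e: "m0 - m + 1 = Suc (m0 - Suc m + 1)" using Suc by simp
      show ?thesis unfolding e mult_Suc using k(1) k2(1) by linarith
    qed
    ultimately show ?thesis using k2(3) by blast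
  qed
qed

lemma exact_start: "steps xs 2 (11, r) = (13, r(8 := 1, 9 := 0))"
  by (simp add: ex)



lemma pw_ge:
  fixes \<rho> y :: real
  assumes "1 < \<rho>" "0 < y"
  shows "y \<le> \<rho> ^ nat \<lceil>ln y / ln \<rho>\<rceil>"
proof -
  have lr: "0 < ln \<rho>" using assms by simp
  have "ln y / ln \<rho> \<le> real (nat \<lceil>ln y / ln \<rho>\<rceil>)" by linarith
  hence "ln y \<le> real (nat \<lceil>ln y / ln \<rho>\<rceil>) * ln \<rho>" using lr by (simp add: divide_le_eq)
  also have "\<dots> = ln (\<rho> ^ nat \<lceil>ln y / ln \<rho>\<rceil>)" using assms by (simp add: ln_realpow)
  finally show ?thesis using assms by (subst (asm) ln_le_cancel_iff) auto
qed

lemma pw_gt: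
  fixes \<rho> y :: real
  assumes "1 < \<rho>" "0 < y" "ln y / ln \<rho> < real k"
  shows "y < \<rho> ^ k"
proof -
  have lr: "0 < ln \<rho>" using assms by simp
  have "ln y < real k * ln \<rho>" using assms lr by (simp add: divide_less_eq)
  also have "\<dots> = ln (\<rho> ^ k)" using assms by (simp add: ln_realpow)
  finally show ?thesis using assms by (subst (asm) ln_less_cancel_iff) auto
qed

lemma ln_rho_lb:
  fixes g :: real
  assumes "0 < g" "g \<le> 1/4"
  shows "g / 2 \<le> ln (1 + g)"
proof -
  have "g - g^2 \<le> ln (1 + g)" using ln_one_plus_pos_lower_bound[of g] assms by simp
  moreover have "g / 2 \<le> g - g^2" using assms by (simp add: power2_eq_square)
  ultimately show ?thesis by simp
qed

lemma fb_big:
  fixes x :: real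
  assumes "0 \<le> x"
  shows "x < real (fb (2 * (nat \<lceil>log 2 (max 1 x)\<rceil> + 1) + 1))"
proof -
  define kk where "kk = nat \<lceil>log 2 (max 1 x)\<rceil> + 1"
  have "log 2 (max 1 x) + 1 \<le> real kk" unfolding kk_def by linarith
  hence "2 powr (log 2 (max 1 x) + 1) \<le> 2 powr real kk" by (intro powr_mono) auto
  hence "2 * max 1 x \<le> 2 powr real kk" by (simp add: powr_add)
  also have "\<dots> = real (2 ^ kk)" by (simp add: powr_realpow)
  also have "\<dots> \<le> real (fb (2 * kk + 1))" using fb_exp[of kk] by (simp only: of_nat_le_iff)
  finally show ?thesis unfolding kk_def using assms by linarith
qed

lemma ln_le_log2: "(1::real) \<le> y \<Longrightarrow> ln y \<le> log 2 y"
proof -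
  assume y: "1 \<le> y"
  have l: "0 \<le> ln y" using y by simp
  have "ln 2 < (1::real)" by (rule ln_2_less_1)
  hence "ln y * ln 2 \<le> ln y" using l by (simp add: mult_left_le)
  thus ?thesis unfolding log_def using l by (simp add: le_divide_eq)
qed

lemma final_arith:
  fixes \<epsilon> Rt :: real and n ma mb kk t :: nat
  assumes ep: "0 < \<epsilon>" and ng: "1 \<le> real n * gg \<epsilon>" and Rt: "1 \<le> Rt"
    and ma: "real ma \<le> ln Rt / ln (1 + gg \<epsilon>) + 1"
    and mb: "real mb \<le> ln (real n / (gg \<epsilon>)^2) / ln (1 + gg \<epsilon>) + 2"
    and kk: "real kk \<le> log 2 (max 1 (ln (real n) / ln (1 + gg \<epsilon>))) + 2"
    and t: "t \<le> 20 + 5 * (2 * kk + 1) + (min ma mb + 1) * (13 * (2 * kk + 1) + 18)"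
  shows "real t \<le> 6000 * ((1 + 1 / \<epsilon>) * (1 + min (plog (real n)) (plog Rt))
           * (1 + plog (1 / \<epsilon>) + plog (plog (real n))))"
proof -
  define g where "g = gg \<epsilon>"
  define A where "A = 1 + 1 / \<epsilon>"
  define lr where "lr = ln (1 + g)"
  define Ln where "Ln = log 2 (real n)"
  define PR where "PR = log 2 Rt"
  define M where "M = min Ln PR"
  define \<Lambda> where "\<Lambda> = plog (1 / \<epsilon>) + plog (plog (real n))"
  have g0: "0 < g" "g \<le> 1/4" unfolding g_def using gg_pos[OF ep] gg_le by auto
  have A1: "1 \<le> A" unfolding A_def using ep by simp
  have ginv: "1 / g \<le> 4 * A" unfolding g_def gg_def A_def using ep by (auto simp: field_simps)
  have n4: "4 \<le> real n"
  proof -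
    have "real n * g \<le> real n * (1/4)" using g0 by (intro mult_left_mono) auto
    thus ?thesis using ng g_def by simp
  qed
  have lrb: "g / 2 \<le> lr" unfolding lr_def using ln_rho_lb[OF g0] .
  have lr0: "0 < lr" using lrb g0 by simp
  have Ln2: "2 \<le> Ln"
  proof -
    have "log 2 4 \<le> log 2 (real n)" using n4 by simp
    moreover have "log 2 (4::real) = 2" using log_pow_cancel[of "2::real" 2] by simp
    ultimately show ?thesis unfolding Ln_def by simp
  qed
  have PR0: "0 \<le> PR" unfolding PR_def using Rt by simp
  have plogn: "plog (real n) = Ln" unfolding plog_def Ln_def using n4 by simp
  have plogR: "plog Rt = PR" unfolding plog_def PR_def using Rt by simp
  have Lam0: "0 \<le> plog (1 / \<epsilon>)" "0 \<le> plog (plog (real n))" unfolding plog_def by auto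
  have lnn: "0 \<le> ln (real n)" "ln (real n) \<le> Ln" using n4 ln_le_log2[of "real n"] unfolding Ln_def by auto
  have "ln Rt / lr \<le> ln Rt / (g / 2)" using Rt lrb g0 by (intro divide_left_mono) auto
  also have "\<dots> = 2 * ln Rt * (1 / g)" by simp
  also have "\<dots> \<le> 2 * ln Rt * (4 * A)" using ginv Rt by (intro mult_left_mono) auto
  also have "\<dots> \<le> 8 * A * PR" using ln_le_log2[OF Rt] A1 unfolding PR_def by (simp add: mult_left_mono)
  finally have maB: "real ma \<le> 8 * A * PR + 1" using ma unfolding lr_def g_def by simp
  have ng2: "real n / g^2 \<le> real n ^ 3"
  proof -
    have "1 / g \<le> real n" using ng g0 unfolding g_def by (simp add: field_simps)
    hence "(1 / g)^2 \<le> real n ^ 2" using g0 by (intro power_mono) auto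
    hence "real n * (1 / g)^2 \<le> real n * real n ^ 2" using n4 by (intro mult_left_mono) auto
    thus ?thesis by (simp add: power2_eq_square power3_eq_cube field_simps)
  qed
  have ng1: "1 \<le> real n / g^2"
  proof -
    have "g^2 \<le> 1" using g0 by (simp add: power_le_one)
    thus ?thesis using n4 g0 by (simp add: field_simps)
  qed
  have "ln (real n / g^2) \<le> ln (real n ^ 3)" using ng2 ng1 by (intro ln_mono) auto
  also have "\<dots> = 3 * ln (real n)" using n4 by (simp add: ln_realpow)
  finally have lnb: "ln (real n / g^2) \<le> 3 * ln (real n)" .
  have "ln (real n / g^2) / lr \<le> ln (real n / g^2) / (g / 2)" using ng1 lrb g0 by (intro divide_left_mono) auto
  also have "\<dots> = 2 * ln (real n / g^2) * (1 / g)" by simp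
  also have "\<dots> \<le> 2 * (3 * ln (real n)) * (4 * A)" using ginv lnb ng1 g0 lnn
    by (intro mult_mono) auto
  also have "\<dots> \<le> 24 * A * Ln" using lnn A1 by (simp add: mult_left_mono)
  finally have mbB: "real mb \<le> 24 * A * Ln + 2" using mb unfolding lr_def g_def by simp
  have m0B: "real (min ma mb) + 1 \<le> 27 * A * (1 + M)"
  proof (cases "PR \<le> Ln")
    case True
    hence "M = PR" unfolding M_def by simp
    have "real (min ma mb) \<le> 8 * A * PR + 1" using maB by linarith
    also have "\<dots> \<le> 24 * A * PR + 2" using A1 PR0 by (simp add: mult_right_mono)
    finally show ?thesis using \<open>M = PR\<close> A1 PR0 by (simp add: algebra_simps)
  next
    case False
    hence "M = Ln" unfolding M_def by simp
    have "real (min ma mb) \<le> 24 * A * Ln + 2" using mbB by linarith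
    thus ?thesis using \<open>M = Ln\<close> A1 Ln2 by (simp add: algebra_simps)
  qed
  have "ln (real n) / lr \<le> ln (real n) / (g / 2)" using lnn lrb g0 by (intro divide_left_mono) auto
  also have "\<dots> = 2 * ln (real n) * (1 / g)" by simp
  also have "\<dots> \<le> 2 * Ln * (4 * A)" using ginv lnn g0 by (intro mult_mono) auto
  finally have xb: "ln (real n) / lr \<le> 8 * A * Ln" by (simp add: mult_ac)
  have A2: "A \<le> 2 * max 1 (1 / \<epsilon>)" unfolding A_def by auto
  have mx: "max 1 (ln (real n) / lr) \<le> 16 * max 1 (1 / \<epsilon>) * Ln"
  proof -
    have h1: "8 * A * Ln \<le> 16 * max 1 (1 / \<epsilon>) * Ln" using A2 Ln2 by (intro mult_right_mono) auto
    have "16 * 1 * 1 \<le> 16 * max 1 (1 / \<epsilon>) * Ln" using Ln2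
      by (intro mult_mono) auto
    hence h2: "1 \<le> 16 * max 1 (1 / \<epsilon>) * Ln" by simp
    show ?thesis unfolding max.bounded_iff using xb h1 h2 by linarith
  qed
  have "log 2 (max 1 (ln (real n) / lr)) \<le> log 2 (16 * max 1 (1 / \<epsilon>) * Ln)"
    using mx by (intro log_mono) auto
  also have "\<dots> = log 2 16 + log 2 (max 1 (1 / \<epsilon>)) + log 2 Ln"
    using Ln2 ep by (simp add: log_mult max_def)
  also have "log 2 (16::real) = 4" using log_pow_cancel[of "2::real" 4] by simp
  also have "log 2 (max 1 (1 / \<epsilon>)) = plog (1 / \<epsilon>)" unfolding plog_def by simp
  also have "log 2 Ln = plog (plog (real n))"
  proof -
    have "plog Ln = log 2 Ln" unfolding plog_def using Ln2 by simp
    thus ?thesis using plogn by simp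
  qed
  finally have kkB: "real kk \<le> 6 + \<Lambda>" using kk unfolding \<Lambda>_def lr_def g_def by simp
  have Lam: "0 \<le> \<Lambda>" unfolding \<Lambda>_def using Lam0 by simp
  have M0: "0 \<le> M" unfolding M_def using PR0 Ln2 by simp
  define B where "B = A * (1 + M) * (1 + \<Lambda>)"
  have B1: "1 \<le> B"
  proof -
    have "1 * 1 * 1 \<le> A * (1 + M) * (1 + \<Lambda>)" using A1 M0 Lam by (intro mult_mono) auto
    thus ?thesis unfolding B_def by simp
  qed
  have Jb: "real (2 * kk + 1) \<le> 13 * (1 + \<Lambda>)" using kkB Lam by simp
  have "real t \<le> real (20 + 5 * (2 * kk + 1) + (min ma mb + 1) * (13 * (2 * kk + 1) + 18))"
    using t by (simp only: of_nat_le_iff)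
  also have "\<dots> = 20 + 5 * real (2 * kk + 1) + (real (min ma mb) + 1) * (13 * real (2 * kk + 1) + 18)"
    by (simp add: algebra_simps)
  also have "\<dots> \<le> 20 + 5 * (13 * (1 + \<Lambda>)) + (27 * A * (1 + M)) * (13 * (13 * (1 + \<Lambda>)) + 18)"
    using Jb m0B Lam by (intro add_mono mult_mono) auto
  also have "\<dots> \<le> 85 * B + 5049 * B"
  proof -
    have "20 + 5 * (13 * (1 + \<Lambda>)) \<le> 85 * (1 + \<Lambda>)" using Lam by simp
    also have "\<dots> \<le> 85 * B"
    proof -
      have "1 * 1 * (1 + \<Lambda>) \<le> A * (1 + M) * (1 + \<Lambda>)" using A1 M0 Lam by (intro mult_mono) auto
      thus ?thesis unfolding B_def by simp
    qed
    finally have a: "20 + 5 * (13 * (1 + \<Lambda>)) \<le> 85 * B" .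
    have "13 * (13 * (1 + \<Lambda>)) + 18 \<le> 187 * (1 + \<Lambda>)" using Lam by simp
    hence "(27 * A * (1 + M)) * (13 * (13 * (1 + \<Lambda>)) + 18) \<le> (27 * A * (1 + M)) * (187 * (1 + \<Lambda>))"
      using A1 M0 by (intro mult_left_mono) auto
    also have "\<dots> = 5049 * B" unfolding B_def by simp
    finally show ?thesis using a by linarith
  qed
  also have "\<dots> \<le> 6000 * B" using B1 by simp
  finally show ?thesis unfolding B_def A_def M_def \<Lambda>_def plogn plogR by (simp add: add.assoc)
qed



lemma sorted_le_last: "sorted xs \<Longrightarrow> x \<in> set xs \<Longrightarrow> x \<le> xs ! (length xs - 1)"
  by (auto simp: in_set_conv_nth intro: sorted_nth_mono)

lemma Max_last: "sorted xs \<Longrightarrow> xs \<noteq> [] \<Longrightarrow> Max (set xs) = xs ! (length xs - 1)"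
  using sorted_le_last[of xs] by (intro Max_eqI) auto

lemma bound_ge: "0 < \<epsilon> \<Longrightarrow> 1 + 1 / \<epsilon> \<le> bound \<epsilon> xs"
proof -
  assume ep: "0 < \<epsilon>"
  have a: "0 \<le> plog x" for x unfolding plog_def by simp
  have "(1 + 1 / \<epsilon>) * 1 * 1 \<le> (1 + 1 / \<epsilon>) * (1 + min (plog (real (length xs))) (plog (ratio xs)))
      * (1 + plog (1 / \<epsilon>) + plog (plog (real (length xs))))"
    using ep a by (intro mult_mono) (auto simp: a add_nonneg_nonneg)
  thus ?thesis unfolding bound_def by simp
qed

lemma ginv_le: "0 < \<epsilon> \<Longrightarrow> 1 / gg \<epsilon> \<le> 4 * (1 + 1 / \<epsilon>)"
  unfolding gg_def by (auto simp: field_simps)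

lemma run_steps: "run P xs \<epsilon> t = steps xs t (init (length xs) \<epsilon>)"
  by (simp add: run_def steps_def)

lemma approx_self: "0 \<le> S \<Longrightarrow> 0 < \<epsilon> \<Longrightarrow> approx \<epsilon> S S"
  unfolding approx_def by (auto simp: field_simps intro: order.trans[OF _ mult_right_mono[of 1]])

lemma sum_nonneg_list: "\<forall>x\<in>set xs. 0 \<le> x \<Longrightarrow> 0 \<le> sum_list (xs :: real list)"
  by (induction xs) auto

lemma case_exact:
  assumes fr: "frame xs \<epsilon> r"
  shows "\<exists>t s. t \<le> 5 * length xs + 4 \<and> steps xs t (11, r) = s \<and> halted P s \<and> snd s 0 = sum_list xs"
proof -
  have fr': "frame xs \<epsilon> (r(8 := 1, 9 := 0))" using fr unfolding frame_def by simp
  obtain k r' where k: "k \<le> 5 * (length xs + 1 - 1) + 2" "steps xs k (13, r(8 := 1, 9 := 0)) = (19, r')"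
    "r' 0 = sum_list xs"
    using exact_loop[OF fr', of 1] by auto
  have "steps xs (2 + k) (11, r) = (19, r')" by (simp only: steps_add exact_start k(2))
  moreover have "halted P (19, r')" by (simp add: halted_def P_len P_nth)
  ultimately show ?thesis using k by (intro exI[of _ "2 + k"] exI[of _ "(19, r')"]) auto
qed

lemma case_zero:
  assumes "query xs (r 0) \<le> r 2"
  shows "\<exists>t s. t \<le> 3 \<and> steps xs t (20, r) = s \<and> halted P s \<and> snd s 0 = 0"
proof -
  obtain r' where r': "steps xs 3 (20, r) = (73, r')" "r' 0 = 0" using main_zero[OF assms] by blast
  moreover have "halted P (73, r')" by (simp add: halted_def P_len P_nth)
  ultimately show ?thesis by (intro exI[of _ 3] exI[of _ "(73, r')"]) auto
qed

lemma ratio_facts: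
  assumes srt: "sorted xs" and n1: "1 \<le> length xs" and T0: "0 < xs ! (length xs - 1)"
  shows "ratio xs = xs ! (length xs - 1) / Min {x \<in> set xs. 0 < x}"
    and "0 < Min {x \<in> set xs. 0 < x}"
    and "\<And>x. x \<in> set xs \<Longrightarrow> 0 < x \<Longrightarrow> Min {x \<in> set xs. 0 < x} \<le> x"
    and "1 \<le> ratio xs"
proof -
  have mem: "xs ! (length xs - 1) \<in> set xs" using n1 by simp
  have ex: "\<exists>x\<in>set xs. x > 0" using mem T0 by blast
  have fin: "finite {x \<in> set xs. 0 < x}" by simp
  have ne: "{x \<in> set xs. 0 < x} \<noteq> {}" using ex by auto
  have Mx: "Max (set xs) = xs ! (length xs - 1)" using Max_last[OF srt] n1 by (cases xs) auto
  show r: "ratio xs = xs ! (length xs - 1) / Min {x \<in> set xs. 0 < x}"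
    unfolding ratio_def using ex Mx by simp
  have "Min {x \<in> set xs. 0 < x} \<in> {x \<in> set xs. 0 < x}" using Min_in[OF fin ne] .
  thus mpos: "0 < Min {x \<in> set xs. 0 < x}" by simp
  show ml: "\<And>x. x \<in> set xs \<Longrightarrow> 0 < x \<Longrightarrow> Min {x \<in> set xs. 0 < x} \<le> x"
    using fin by (intro Min_le) auto
  have "Min {x \<in> set xs. 0 < x} \<le> xs ! (length xs - 1)" using ml[OF mem T0] .
  thus "1 \<le> ratio xs" unfolding r using mpos by simp
qed



lemma case_pos:
  fixes xs \<epsilon> r k0
  defines "\<rho> \<equiv> 1 + gg \<epsilon>"
  assumes srt: "sorted xs" and nn: "\<forall>x\<in>set xs. 0 \<le> x" and ep: "0 < \<epsilon>" and fr: "frame xs \<epsilon> r"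
    and ng: "1 \<le> real (length xs) * gg \<epsilon>" and pos: "\<not> query xs (r 0) \<le> r 2" and k0: "k0 \<le> 10"
  shows "\<exists>t s. real (k0 + t) \<le> 6000 * bound \<epsilon> xs \<and> steps xs t (20, r) = s \<and> halted P s
     \<and> approx \<epsilon> (sum_list xs) (snd s 0)"
proof -
  define n where "n = length xs"
  have rho: "1 < \<rho>" unfolding \<rho>_def using gg_pos[OF ep] by simp
  have g0: "0 < gg \<epsilon>" "gg \<epsilon> \<le> 1/4" using gg_pos[OF ep] gg_le by auto
  have n4: "4 \<le> real n"
  proof -
    have "real n * gg \<epsilon> \<le> real n * (1/4)" using g0 by (intro mult_left_mono) auto
    thus ?thesis using ng n_def by simp
  qed
  hence n1: "1 \<le> length xs" unfolding n_def by simp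
  define T0 where "T0 = xs ! (length xs - 1)"
  have rv: "r 0 = real (length xs)" "r 2 = 0" "r 5 = \<rho>" using fr unfolding frame_def \<rho>_def by auto
  have qT: "query xs (r 0) = T0" unfolding T0_def rv(1) query_nat using n1 by simp
  have T0p: "0 < T0" using pos qT rv by simp
  obtain r1 where r1: "steps xs 4 (20, r) = (24, r1)" "r1 15 = query xs (r 0)" "r1 10 = r 5 + r 2" "r1 11 = 1"
    "\<forall>i. i \<notin> {10,11,15} \<longrightarrow> r1 i = r i" using main_go[OF pos] by blast
  have fr1: "frame xs \<epsilon> r1" using fr r1(5) unfolding frame_def by simp
  define kk where "kk = nat \<lceil>log 2 (max 1 (ln (real n) / ln \<rho>))\<rceil> + 1"
  define Jb where "Jb = 2 * kk + 1"
  have Jbn: "real (length xs) < \<rho> ^ fb Jb"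
  proof -
    have "0 \<le> ln (real n) / ln \<rho>" using n4 rho by simp
    from fb_big[OF this] have "ln (real n) / ln \<rho> < real (fb Jb)" unfolding Jb_def kk_def .
    have "0 < real n" using n4 by simp
    from pw_gt[OF rho this] \<open>ln (real n) / ln \<rho> < real (fb Jb)\<close> show ?thesis unfolding n_def by blast
  qed
  obtain kp r2 J where p: "kp \<le> 5 * (Jb - 1) + 2" "steps xs kp (24, r1) = (30, r2)" "r2 10 = \<rho> ^ fb J"
    "r2 11 = \<rho> ^ fb (J - 1)" "1 \<le> J" "J \<le> Jb" "real (length xs) < \<rho> ^ fb J" "\<forall>i. i \<notin> {6,10,11} \<longrightarrow> r2 i = r1 i"
    using precomp[OF ep fr1, of 1 Jb] r1(3,4) rv Jbn unfolding \<rho>_def Jb_def by auto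
  obtain r3 where r3: "steps xs 4 (30, r2) = (34, r3)" "r3 12 = r2 10 + r2 2" "r3 13 = r2 11 + r2 2"
    "r3 14 = 1" "r3 16 = 0" "\<forall>i. i \<notin> {12,13,14,16} \<longrightarrow> r3 i = r2 i" using setup_lv by blast
  have fr3: "frame xs \<epsilon> r3" using fr1 p(8) r3(6) unfolding frame_def by simp
  have cnt1: "1 \<le> cntT xs T0"
  proof -
    have "{length xs - 1} \<subseteq> {j. j < length xs \<and> T0 \<le> xs ! j}" using n1 T0_def by auto
    from card_mono[OF _ this] show ?thesis unfolding cntT_def by simp
  qed
  have LI0: "LI xs \<epsilon> T0 J 0 r3"
    unfolding LI_def using fr3 r3 p r1 fr1 qT cnt1 unfolding frame_def \<rho>_def
    by (auto simp: thr_def Lsum_def)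
  define Rt where "Rt = ratio xs"
  define xmin where "xmin = Min {x \<in> set xs. 0 < x}"
  note rf = ratio_facts[OF srt n1 T0p[unfolded T0_def]]
  have Rt: "Rt = T0 / xmin" "0 < xmin" "\<And>x. x \<in> set xs \<Longrightarrow> 0 < x \<Longrightarrow> xmin \<le> x" "1 \<le> Rt"
    using rf unfolding Rt_def xmin_def T0_def by auto
  define ma where "ma = nat \<lceil>ln Rt / ln \<rho>\<rceil>"
  define mb where "mb = nat \<lceil>ln (real n / (gg \<epsilon>)^2) / ln \<rho>\<rceil> + 1"
  define m0 where "m0 = min ma mb"
  have G: "Gd xs \<epsilon> T0 m0"
  proof (cases "ma \<le> mb")
    case True
    hence m: "m0 = ma" unfolding m0_def by simp
    have "Rt \<le> \<rho> ^ ma" unfolding ma_def using pw_ge[OF rho] Rt by simp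
    moreover have "0 < Rt" using Rt by simp
    moreover have "0 < \<rho> ^ ma" using rho by simp
    ultimately have "T0 / \<rho> ^ ma \<le> T0 / Rt" using T0p by (intro divide_left_mono) auto
    also have "T0 / Rt = xmin" using Rt T0p by simp
    finally have "\<forall>x\<in>set xs. 0 < x \<longrightarrow> thr T0 \<rho> m0 \<le> x" using Rt(3) m unfolding thr_def by force
    thus ?thesis unfolding Gd_def \<rho>_def by simp
  next
    case False
    hence m: "m0 = mb" unfolding m0_def by simp
    have q: "0 < real n / (gg \<epsilon>)^2" using n4 g0 by simp
    have pw: "real n / (gg \<epsilon>)^2 \<le> \<rho> ^ (mb - 1)" unfolding mb_def using pw_ge[OF rho q] by simp
    have "\<rho> ^ mb = \<rho> * \<rho> ^ (mb - 1)" unfolding mb_def by simp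
    have "real n * thr T0 \<rho> mb = real n * T0 / (\<rho> * \<rho> ^ (mb - 1))"
      unfolding thr_def \<open>\<rho> ^ mb = \<rho> * \<rho> ^ (mb - 1)\<close> by simp
    also have "\<dots> \<le> real n * T0 / (\<rho> * (real n / (gg \<epsilon>)^2))"
      using pw rho n4 T0p q by (intro divide_left_mono mult_left_mono mult_pos_pos) auto
    also have "\<dots> = gg \<epsilon> * (gg \<epsilon> * T0 / \<rho>)" using n4 g0 rho by (simp add: field_simps power2_eq_square)
    finally show ?thesis unfolding Gd_def \<rho>_def m mb_def n_def by simp
  qed
  obtain kl r4 where l: "kl \<le> (m0 - 0 + 1) * (13 * J + 18)" "steps xs kl (34, r3) = (69, r4)" "FIN xs \<epsilon> r4"
    using levels[OF srt nn ep n1 T0_def T0p G LI0] by blast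
  define s where "s = (71::nat, r4(6 := r4 3 + r4 1, 0 := (r4 3 + r4 1) * r4 17))"
  have st: "steps xs (4 + kp + 4 + kl + 2) (20, r) = s"
    unfolding s_def by (simp only: steps_add r1(1) p(2) r3(1) l(2) final_seg)
  have hl: "halted P s" unfolding s_def by (simp add: halted_def P_len P_nth)
  have out: "snd s 0 = (1 + \<epsilon>) * r4 17" using l(3) unfolding s_def FIN_def frame_def by simp
  have ap: "approx \<epsilon> (sum_list xs) (snd s 0)"
  proof -
    have f: "r4 17 \<le> sum_list xs" "sum_list xs \<le> ((1 + gg \<epsilon>)^2 + gg \<epsilon>) * r4 17" using l(3) unfolding FIN_def by auto
    have c: "(1 + gg \<epsilon>)^2 + gg \<epsilon> \<le> 1 + \<epsilon>"
    proof -
      have "gg \<epsilon> * gg \<epsilon> \<le> gg \<epsilon> * (1/4)" using g0 by (intro mult_left_mono) auto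
      moreover have "(1 + gg \<epsilon>)^2 + gg \<epsilon> = 1 + 3 * gg \<epsilon> + gg \<epsilon> * gg \<epsilon>"
        by (simp add: power2_eq_square algebra_simps)
      ultimately show ?thesis using gg_le_eps[OF ep] g0 by linarith
    qed
    have S0: "0 \<le> sum_list xs" using sum_nonneg_list[OF nn] .
    have E0: "0 \<le> r4 17"
    proof (rule ccontr)
      assume "\<not> 0 \<le> r4 17"
      hence "((1 + gg \<epsilon>)^2 + gg \<epsilon>) * r4 17 < 0" using g0 by (simp add: mult_pos_neg add_pos_pos)
      thus False using f S0 by simp
    qed
    have "sum_list xs \<le> (1 + \<epsilon>) * r4 17" using f(2) c E0 by (smt (verit) mult_right_mono)
    hence a1: "sum_list xs / (1 + \<epsilon>) \<le> (1 + \<epsilon>) * r4 17"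
      using ep E0 S0 by (smt (verit) divide_le_eq_1 mult_le_cancel_left1 divide_nonneg_pos le_divide_eq)
    have a2: "(1 + \<epsilon>) * r4 17 \<le> (1 + \<epsilon>) * sum_list xs" using f(1) ep by simp
    show ?thesis unfolding approx_def out using a1 a2 by simp
  qed
  have tb: "real (k0 + (4 + kp + 4 + kl + 2)) \<le> 6000 * bound \<epsilon> xs"
  proof -
    have "k0 + (4 + kp + 4 + kl + 2) \<le> 20 + 5 * (2 * kk + 1) + (min ma mb + 1) * (13 * (2 * kk + 1) + 18)"
    proof -
      have "(m0 - 0 + 1) * (13 * J + 18) \<le> (min ma mb + 1) * (13 * (2 * kk + 1) + 18)"
      proof -
        have "13 * J + 18 \<le> 13 * (2 * kk + 1) + 18" using p(6) unfolding Jb_def by simp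
        thus ?thesis unfolding m0_def by (simp only: diff_zero mult_le_mono2)
      qed
      hence "kl \<le> (min ma mb + 1) * (13 * (2 * kk + 1) + 18)" using l(1) by linarith
      moreover have "kp \<le> 5 * (2 * kk + 1)" using p(1) unfolding Jb_def by simp
      ultimately show ?thesis using k0 by simp
    qed
    moreover have "real ma \<le> ln Rt / ln (1 + gg \<epsilon>) + 1"
    proof -
      have "0 \<le> ln Rt / ln \<rho>" using Rt(4) rho by simp
      thus ?thesis unfolding ma_def \<rho>_def by linarith
    qed
    moreover have "real mb \<le> ln (real (length xs) / (gg \<epsilon>)^2) / ln (1 + gg \<epsilon>) + 2"
    proof -
      have "1 \<le> real n / (gg \<epsilon>)^2"
      proof -
        have "(gg \<epsilon>)^2 \<le> 1" using g0 by (simp add: power_le_one)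
        thus ?thesis using n4 g0 by (simp add: field_simps)
      qed
      hence "0 \<le> ln (real n / (gg \<epsilon>)^2) / ln \<rho>" using rho by simp
      thus ?thesis unfolding mb_def \<rho>_def n_def by linarith
    qed
    moreover have "real kk \<le> log 2 (max 1 (ln (real (length xs)) / ln (1 + gg \<epsilon>))) + 2"
    proof -
      have "0 \<le> log 2 (max 1 (ln (real n) / ln \<rho>))" by simp
      thus ?thesis unfolding kk_def \<rho>_def n_def by linarith
    qed
    ultimately have "real (k0 + (4 + kp + 4 + kl + 2)) \<le> 6000 * ((1 + 1 / \<epsilon>) * (1 + min (plog (real (length xs))) (plog Rt))
           * (1 + plog (1 / \<epsilon>) + plog (plog (real (length xs)))))"
      using final_arith[OF ep ng Rt(4)] by blast
    thus ?thesis unfolding bound_def Rt_def .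
  qed
  show ?thesis using tb st hl ap by blast
qed



theorem theorem1:
  shows "\<exists>(P::prog) (C::real). C > 0 \<and>
    (\<forall>\<epsilon>::real. \<forall>xs::real list. \<epsilon> > 0 \<longrightarrow> sorted xs \<longrightarrow> (\<forall>x\<in>set xs. 0 \<le> x) \<longrightarrow>
       halts_within P xs \<epsilon> (C * bound \<epsilon> xs) (approx \<epsilon> (sum_list xs)))"
proof (intro exI[of _ P] exI[of _ 6000] conjI allI impI)
  show "(0::real) < 6000" by simp
  fix \<epsilon> :: real and xs :: "real list"
  assume ep: "\<epsilon> > 0" and srt: "sorted xs" and nn: "\<forall>x\<in>set xs. 0 \<le> x"
  obtain k0 r where k0: "k0 \<le> 10" "steps xs k0 (init (length xs) \<epsilon>) = (if 1 \<le> real (length xs) * gg \<epsilon> then 20 else 11, r)"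
    "frame xs \<epsilon> r" using init_seg by blast
  have B: "1 + 1 / \<epsilon> \<le> bound \<epsilon> xs" using bound_ge[OF ep] .
  have A1: "1 \<le> 1 + 1 / \<epsilon>" using ep by simp
  have goal: "\<exists>t s. real (k0 + t) \<le> 6000 * bound \<epsilon> xs \<and> steps xs t (if 1 \<le> real (length xs) * gg \<epsilon> then 20 else 11, r) = s
      \<and> halted P s \<and> approx \<epsilon> (sum_list xs) (snd s 0)"
  proof (cases "1 \<le> real (length xs) * gg \<epsilon>")
    case ng: True
    have n1: "1 \<le> length xs"
    proof (rule ccontr)
      assume "\<not> 1 \<le> length xs"
      hence "length xs = 0" by linarith
      thus False using ng by simp
    qed
    show ?thesis
    proof (cases "query xs (r 0) \<le> r 2")
      case True
      obtain t s where ts: "t \<le> 3" "steps xs t (20, r) = s" "halted P s" "snd s 0 = 0"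
        using case_zero[OF True] by blast
      have rv: "r 0 = real (length xs)" "r 2 = 0" using k0(3) unfolding frame_def by auto
      have q: "query xs (r 0) = xs ! (length xs - 1)" unfolding rv(1) query_nat using n1 by simp
      have "xs ! (length xs - 1) \<le> 0" using True q rv(2) by simp
      hence z: "\<forall>x\<in>set xs. x = 0"
      proof -
        assume l: "xs ! (length xs - 1) \<le> 0"
        show ?thesis
        proof
          fix x assume x: "x \<in> set xs"
          have "x \<le> xs ! (length xs - 1)" by (rule sorted_le_last[OF srt x])
          moreover have "0 \<le> x" using nn x by blast
          ultimately show "x = 0" using l by linarith
        qed
      qed
      have S: "sum_list xs = 0" unfolding sum_list_nth using z by (intro sum.neutral) (auto simp: nth_mem)
      have "real (k0 + t) \<le> 13" using k0(1) ts(1) by simp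
      also have "\<dots> \<le> 6000 * bound \<epsilon> xs"
      proof -
        have "\<And>a b::real. a \<le> b \<Longrightarrow> 1 \<le> a \<Longrightarrow> 13 \<le> 6000 * b" by linarith
        thus ?thesis using B A1 by blast
      qed
      finally have tt: "real (k0 + t) \<le> 6000 * bound \<epsilon> xs" .
      have ap: "approx \<epsilon> (sum_list xs) (snd s 0)" using ts(4) S unfolding approx_def by simp
      have "steps xs t (if 1 \<le> real (length xs) * gg \<epsilon> then 20 else 11, r) = s" using ts(2) ng by simp
      thus ?thesis using tt ap ts(3) by blast
    next
      case False
      from case_pos[OF srt nn ep k0(3) ng False k0(1)] obtain t s where
        ts: "real (k0 + t) \<le> 6000 * bound \<epsilon> xs" "steps xs t (20, r) = s" "halted P s" "approx \<epsilon> (sum_list xs) (snd s 0)"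
        by blast
      have "steps xs t (if 1 \<le> real (length xs) * gg \<epsilon> then 20 else 11, r) = s" using ts(2) ng by simp
      thus ?thesis using ts(1,3,4) by blast
    qed
  next
    case ng: False
    obtain t s where ts: "t \<le> 5 * length xs + 4" "steps xs t (11, r) = s" "halted P s" "snd s 0 = sum_list xs"
      using case_exact[OF k0(3)] by blast
    have "real (length xs) < 1 / gg \<epsilon>" using ng gg_pos[OF ep] by (simp add: field_simps)
    also have "\<dots> \<le> 4 * (1 + 1 / \<epsilon>)" using ginv_le[OF ep] .
    finally have n: "real (length xs) < 4 * (1 + 1 / \<epsilon>)" .
    have "real (k0 + t) \<le> 14 + 5 * real (length xs)" using k0(1) ts(1) by simp
    also have "\<dots> \<le> 34 * (1 + 1 / \<epsilon>)"
    proof -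
      have "\<And>a m::real. m < 4 * a \<Longrightarrow> 1 \<le> a \<Longrightarrow> 14 + 5 * m \<le> 34 * a" by linarith
      thus ?thesis using n A1 by blast
    qed
    also have "\<dots> \<le> 6000 * bound \<epsilon> xs"
    proof -
      have "\<And>a b::real. a \<le> b \<Longrightarrow> 1 \<le> a \<Longrightarrow> 34 * a \<le> 6000 * b" by linarith
      thus ?thesis using B A1 by blast
    qed
    finally have tt: "real (k0 + t) \<le> 6000 * bound \<epsilon> xs" .
    have ap: "approx \<epsilon> (sum_list xs) (snd s 0)" using ts(4) approx_self[OF sum_nonneg_list[OF nn] ep] by simp
    have "steps xs t (if 1 \<le> real (length xs) * gg \<epsilon> then 20 else 11, r) = s" using ts(2) ng by simp
    thus ?thesis using tt ap ts(3) by blast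
  qed
  then obtain t s where ts: "real (k0 + t) \<le> 6000 * bound \<epsilon> xs"
    "steps xs t (if 1 \<le> real (length xs) * gg \<epsilon> then 20 else 11, r) = s" "halted P s" "approx \<epsilon> (sum_list xs) (snd s 0)"
    by blast
  have "steps xs (k0 + t) (init (length xs) \<epsilon>) = s" by (simp only: steps_add k0(2) ts(2))
  thus "halts_within P xs \<epsilon> (6000 * bound \<epsilon> xs) (approx \<epsilon> (sum_list xs))"
    unfolding halts_within_def run_steps using ts(1,3,4) by blast
qed


end
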